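(* Fix $\epsilon>0$, an integer $d\ge2$ and a polynomial $g(x)\in\mathbb Z[x]$ of degree $d$. There exists $\eta>0$, depending only on $\epsilon,g,d$, such that for any positive integer $q$ and any interval $I$ of length $N\ge q^{1/d+\epsilon}$, $$\Big|\sum_{n\in I}e\Big(\frac{g(n)}{q}\Big)\Big|\ll\frac{N}{q^{\eta}},$$ where the implied constant depends only on $\epsilon,d,g$.
   Context: $e(x)=e^{2\pi i x}$; the sum is over integers $n\in I$. *)

theory Defs
  imports "HOL-Analysis.Analysis" "HOL-Computational_Algebra.Polynomial"
begin

definition e :: "real \<Rightarrow> complex" where
  "e x = exp (2 * of_real pi * \<i> * of_real x)"

end

theory Submission
  imports Defs
begin


lemma e_add: "e (x + y) = e x * e y"
  unfolding e_def by (simp add: algebra_simps exp_add[symmetric])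

lemma e_alt: "e x = exp (\<i> * complex_of_real (2 * pi * x))"
  unfolding e_def by (simp add: algebra_simps)

lemma norm_e [simp]: "norm (e x) = 1"
  unfolding e_alt by (simp add: norm_exp_i_times)

lemma e_int [simp]: "e (real_of_int k) = 1"
proof -
  have "e (real_of_int k) = exp ((2 * (of_int k :: complex) * of_real pi) * \<i>)"
    unfolding e_def by (simp add: algebra_simps)
  also have "\<dots> = 1" using exp_integer_2pi[of "of_int k"] by simp
  finally show ?thesis .
qed

lemma e_minus: "e (- x) = cnj (e x)"
  unfolding e_def by (simp add: exp_cnj)

lemma e_diff: "e (x - y) = e x * cnj (e y)"
  using e_add[of x "-y"] by (simp add: e_minus)

lemma e_mult_nat: "e (real n * x) = (e x) ^ n"
proof (induction n)
  case (Suc n)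
  have "e (real (Suc n) * x) = e (x + real n * x)" by (simp add: algebra_simps)
  also have "\<dots> = e x * e (real n * x)" by (rule e_add)
  finally show ?case using Suc by simp
qed (simp add: e_def)

lemma norm_e_minus_1: "norm (e x - 1) = 2 * \<bar>sin (pi * x)\<bar>"
  unfolding e_alt by (subst dist_exp_i_1) simp


definition dpoly :: "int \<Rightarrow> int poly \<Rightarrow> int poly" where
  "dpoly h p = p \<circ>\<^sub>p [:h, 1:] - p"

lemma poly_dpoly: "poly (dpoly h p) x = poly p (x + h) - poly p x"
  unfolding dpoly_def by (simp add: poly_pcompose algebra_simps)

lemma dpoly_pCons: "dpoly h (pCons a p) = pCons 0 (dpoly h p) + smult h (p \<circ>\<^sub>p [:h, 1:])"
proof -
  have "poly (dpoly h (pCons a p)) = poly (pCons 0 (dpoly h p) + smult h (p \<circ>\<^sub>p [:h, 1:]))"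
    by (rule ext) (simp add: poly_dpoly poly_pcompose algebra_simps)
  then show ?thesis by (simp add: poly_eq_poly_eq_iff)
qed

lemma coeff_pcompose_shift:
  fixes p :: "int poly"
  assumes "degree p \<le> n"
  shows "coeff (p \<circ>\<^sub>p [:h, 1:]) n = coeff p n"
proof (cases "degree p = n")
  case True
  have "degree (p \<circ>\<^sub>p [:h, 1:]) = n" using True degree_pcompose[of p "[:h, 1:]"] by simp
  moreover have "lead_coeff (p \<circ>\<^sub>p [:h, 1:]) = lead_coeff p"
    by (subst lead_coeff_comp) auto
  ultimately show ?thesis using True by simp
next
  case False
  then have "degree p < n" using assms by simp
  moreover have "degree (p \<circ>\<^sub>p [:h, 1:]) < n" using \<open>degree p < n\<close> by (simp add: degree_pcompose)
  ultimately show ?thesis by (simp add: coeff_eq_0)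
qed

lemma dpoly_deg:
  "degree p \<le> Suc k \<Longrightarrow> degree (dpoly h p) \<le> k \<and> coeff (dpoly h p) k = int (Suc k) * h * coeff p (Suc k)"
proof (induction k arbitrary: p)
  case 0
  obtain a p' where p: "p = pCons a p'" by (cases p) auto
  have "degree p' = 0" using 0 p by (cases "p' = 0") auto
  then obtain b where p': "p' = [:b:]" by (metis degree_eq_zeroE)
  have "dpoly h p = [:h * b:]"
    unfolding p p' dpoly_pCons by (simp add: dpoly_def pcompose_pCons)
  then show ?case using p p' by simp
next
  case (Suc k)
  obtain a p' where p: "p = pCons a p'" by (cases p) auto
  have dp': "degree p' \<le> Suc k" using Suc.prems p by (cases "p' = 0") auto
  note IH = Suc.IH[OF dp']
  have d1: "degree (pCons 0 (dpoly h p')) \<le> Suc k"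
    using IH by (metis degree_pCons_le le_trans Suc_le_mono)
  have d2: "degree (smult h (p' \<circ>\<^sub>p [:h, 1:])) \<le> Suc k"
    using dp' degree_smult_le[of h "p' \<circ>\<^sub>p [:h, 1:]"] by (simp add: degree_pcompose)
  have "degree (dpoly h p) \<le> Suc k"
    unfolding p dpoly_pCons using d1 d2 by (meson degree_add_le)
  moreover have "coeff (dpoly h p) (Suc k) = int (Suc (Suc k)) * h * coeff p (Suc (Suc k))"
    unfolding p dpoly_pCons using IH coeff_pcompose_shift[OF dp', of h]
    by (simp add: algebra_simps)
  ultimately show ?case by simp
qed


definition Rg :: "nat \<Rightarrow> int set" where "Rg H = {1 - int H .. int H - 1}"

definition Phi :: "nat \<Rightarrow> nat \<Rightarrow> int \<Rightarrow> real" where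
  "Phi q H m = (if sin (pi * of_int m / real q) = 0 then real H
                else min (real H) (1 / \<bar>sin (pi * of_int m / real q)\<bar>))"

fun Gen :: "nat \<Rightarrow> nat \<Rightarrow> int \<Rightarrow> (int \<Rightarrow> real) \<Rightarrow> real" where
  "Gen H 0 c \<phi> = \<phi> c"
| "Gen H (Suc j) c \<phi> = (\<Sum>h\<in>Rg H. Gen H j (int (j+2) * h * c) \<phi>)"

definition Ssum :: "nat \<Rightarrow> int poly \<Rightarrow> int \<Rightarrow> int \<Rightarrow> complex" where
  "Ssum q p lo hi = (\<Sum>n\<in>{lo..hi}. e (of_int (poly p n) / real q))"

lemma card_Rg: "card (Rg H) \<le> 2 * H"
  unfolding Rg_def by simp

lemma Phi_nonneg: "Phi q H m \<ge> 0"
  unfolding Phi_def by auto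

lemma Ssum_triv: "hi - lo < int H \<Longrightarrow> norm (Ssum q p lo hi) \<le> real H"
proof -
  assume a: "hi - lo < int H"
  have "norm (Ssum q p lo hi) \<le> (\<Sum>n\<in>{lo..hi}. norm (e (of_int (poly p n) / real q)))"
    unfolding Ssum_def by (rule norm_sum)
  also have "\<dots> = real (card {lo..hi})" by simp
  also have "\<dots> \<le> real H" using a by simp
  finally show ?thesis .
qed

lemma geom_bound:
  assumes "sin (pi * \<beta>) \<noteq> 0"
  shows "norm (\<Sum>i<L. (e \<beta>) ^ i) \<le> 1 / \<bar>sin (pi * \<beta>)\<bar>"
proof -
  have n1: "norm (e \<beta> - 1) = 2 * \<bar>sin (pi * \<beta>)\<bar>" by (rule norm_e_minus_1)
  then have ne: "e \<beta> \<noteq> 1" using assms by auto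
  have "(\<Sum>i<L. (e \<beta>) ^ i) = ((e \<beta>) ^ L - 1) / (e \<beta> - 1)"
    using ne by (rule geometric_sum)
  then have "norm (\<Sum>i<L. (e \<beta>) ^ i) = norm ((e \<beta>) ^ L - 1) / (2 * \<bar>sin (pi * \<beta>)\<bar>)"
    by (simp add: norm_divide n1)
  also have "\<dots> \<le> 2 / (2 * \<bar>sin (pi * \<beta>)\<bar>)"
  proof (rule divide_right_mono)
    have "norm ((e \<beta>) ^ L - 1) \<le> norm ((e \<beta>) ^ L) + norm (1::complex)" by (rule norm_triangle_ineq4)
    then show "norm ((e \<beta>) ^ L - 1) \<le> 2" by (simp add: norm_power)
  qed simp
  finally show ?thesis by simp
qed

lemma linear_poly:
  fixes p :: "int poly"
  assumes "degree p \<le> 1"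
  shows "poly p x = coeff p 0 + coeff p 1 * x"
proof -
  obtain a p' where p: "p = pCons a p'" by (cases p) auto
  have "degree p' = 0" using assms p by (cases "p' = 0") auto
  then obtain b where p': "p' = [:b:]" by (metis degree_eq_zeroE)
  show ?thesis using p p' by simp
qed

lemma Ssum_linear:
  assumes "degree p \<le> 1" and "hi - lo < int H"
  shows "norm (Ssum q p lo hi) \<le> Phi q H (coeff p 1)"
proof (cases "sin (pi * of_int (coeff p 1) / real q) = 0")
  case True
  then show ?thesis using Ssum_triv[OF assms(2)] unfolding Phi_def by simp
next
  case False
  define \<beta> where "\<beta> = of_int (coeff p 1) / real q"
  have sb: "sin (pi * \<beta>) \<noteq> 0" using False unfolding \<beta>_def by simp
  have "norm (Ssum q p lo hi) \<le> 1 / \<bar>sin (pi * \<beta>)\<bar>"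
  proof (cases "lo \<le> hi")
    case False
    then show ?thesis unfolding Ssum_def by simp
  next
    case True
    define L where "L = nat (hi - lo + 1)"
    have img: "{lo..hi} = (\<lambda>i. lo + int i) ` {..<L}"
    proof
      show "{lo..hi} \<subseteq> (\<lambda>i. lo + int i) ` {..<L}"
      proof
        fix n assume "n \<in> {lo..hi}"
        then have "n = lo + int (nat (n - lo))" "nat (n - lo) < L" unfolding L_def by auto
        then show "n \<in> (\<lambda>i. lo + int i) ` {..<L}" by blast
      qed
    qed (auto simp: L_def)
    have inj: "inj_on (\<lambda>i. lo + int i) {..<L}" by (auto simp: inj_on_def)
    have "Ssum q p lo hi = (\<Sum>i<L. e (of_int (poly p (lo + int i)) / real q))"
      unfolding Ssum_def img by (simp add: sum.reindex[OF inj])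
    also have "\<dots> = (\<Sum>i<L. e (of_int (poly p lo) / real q) * (e \<beta>) ^ i)"
    proof (rule sum.cong)
      fix i assume "i \<in> {..<L}"
      have "of_int (poly p (lo + int i)) / real q = of_int (poly p lo) / real q + real i * \<beta>"
        using linear_poly[OF assms(1)] unfolding \<beta>_def by (simp add: add_divide_distrib algebra_simps)
      then show "e (of_int (poly p (lo + int i)) / real q) = e (of_int (poly p lo) / real q) * (e \<beta>) ^ i"
        by (simp add: e_add e_mult_nat)
    qed simp
    also have "\<dots> = e (of_int (poly p lo) / real q) * (\<Sum>i<L. (e \<beta>) ^ i)"
      by (simp add: sum_distrib_left)
    finally have "norm (Ssum q p lo hi) = norm (\<Sum>i<L. (e \<beta>) ^ i)" by (simp add: norm_mult)
    then show ?thesis using geom_bound[OF sb] by simp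
  qed
  then show ?thesis using Ssum_triv[OF assms(2), of q p] False unfolding Phi_def \<beta>_def by simp
qed


lemma pow_mean:
  fixes x :: "'a \<Rightarrow> real"
  assumes "finite A" "\<And>i. i \<in> A \<Longrightarrow> x i \<ge> 0"
  shows "(\<Sum>i\<in>A. x i) ^ (2^j) \<le> real (card A) ^ (2^j - 1) * (\<Sum>i\<in>A. x i ^ (2^j))"
  using assms(2)
proof (induction j arbitrary: x)
  case 0
  then show ?case by simp
next
  case (Suc j)
  have nn: "\<And>i. i \<in> A \<Longrightarrow> (x i)^2 \<ge> 0" by simp
  have "(\<Sum>i\<in>A. x i) ^ (2^Suc j) = ((\<Sum>i\<in>A. x i)^2) ^ (2^j)"
    by (simp add: power_mult[symmetric] mult.commute)
  also have "\<dots> \<le> ((\<Sum>i\<in>A. (x i)^2) * real (card A)) ^ (2^j)"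
    by (rule power_mono[OF sum_squared_le_sum_of_squares]) simp
  also have "\<dots> = real (card A) ^ (2^j) * (\<Sum>i\<in>A. (x i)^2) ^ (2^j)"
    by (simp add: power_mult_distrib)
  also have "\<dots> \<le> real (card A) ^ (2^j) * (real (card A) ^ (2^j - 1) * (\<Sum>i\<in>A. ((x i)^2) ^ (2^j)))"
    by (rule mult_left_mono[OF Suc.IH]) (auto intro: nn)
  also have "\<dots> = real (card A) ^ (2^Suc j - 1) * (\<Sum>i\<in>A. x i ^ (2^Suc j))"
  proof -
    have "(2::nat)^j \<ge> 1" by simp
    then have "2^j + (2^j - 1) = 2^Suc j - (1::nat)" by simp
    then have "real (card A) ^ (2^j) * real (card A) ^ (2^j - 1) = real (card A) ^ (2^Suc j - 1)"
      by (metis power_add)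
    moreover have "\<And>i. ((x i)^2) ^ (2^j) = x i ^ (2^Suc j)"
      by (simp add: power_mult[symmetric] mult.commute)
    ultimately show ?thesis by (simp add: mult.assoc[symmetric])
  qed
  finally show ?case .
qed

lemma diff_reindex:
  assumes "hi - lo < int H"
  shows "(\<Sum>n\<in>{lo..hi}. \<Sum>m\<in>{lo..hi}. F n m) =
         (\<Sum>h\<in>Rg H. \<Sum>m\<in>{max lo (lo - h)..min hi (hi - h)}. F (m + h) m)"
proof -
  have "(\<Sum>n\<in>{lo..hi}. \<Sum>m\<in>{lo..hi}. F n m) = (\<Sum>(n, m)\<in>{lo..hi} \<times> {lo..hi}. F n m)"
    by (simp add: sum.cartesian_product)
  also have "\<dots> = (\<Sum>(h, m)\<in>Sigma (Rg H) (\<lambda>h. {max lo (lo - h)..min hi (hi - h)}). F (m + h) m)"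
    by (rule sum.reindex_bij_witness[of _ "\<lambda>(h, m). (m + h, m)" "\<lambda>(n, m). (n - m, m)"])
       (use assms in \<open>auto simp: Rg_def\<close>)
  also have "\<dots> = (\<Sum>h\<in>Rg H. \<Sum>m\<in>{max lo (lo - h)..min hi (hi - h)}. F (m + h) m)"
    by (subst sum.Sigma) (auto simp: Rg_def)
  finally show ?thesis .
qed

lemma weyl_step:
  assumes "hi - lo < int H"
  shows "norm (Ssum q p lo hi) ^ 2 \<le>
         (\<Sum>h\<in>Rg H. norm (Ssum q (dpoly h p) (max lo (lo - h)) (min hi (hi - h))))"
proof -
  define f where "f n = e (of_int (poly p n) / real q)" for n
  have "complex_of_real (norm (Ssum q p lo hi) ^ 2) = Ssum q p lo hi * cnj (Ssum q p lo hi)"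
    by (rule complex_norm_square)
  also have "\<dots> = (\<Sum>n\<in>{lo..hi}. \<Sum>m\<in>{lo..hi}. f n * cnj (f m))"
    unfolding Ssum_def f_def by (simp add: sum_product cnj_sum)
  also have "\<dots> = (\<Sum>h\<in>Rg H. \<Sum>m\<in>{max lo (lo - h)..min hi (hi - h)}. f (m + h) * cnj (f m))"
    by (rule diff_reindex[OF assms])
  also have "\<dots> = (\<Sum>h\<in>Rg H. Ssum q (dpoly h p) (max lo (lo - h)) (min hi (hi - h)))"
  proof (rule sum.cong[OF refl], unfold Ssum_def, rule sum.cong[OF refl])
    fix h m
    have "of_int (poly (dpoly h p) m) / real q = of_int (poly p (m + h)) / real q - of_int (poly p m) / real q"
      by (simp add: poly_dpoly diff_divide_distrib)
    then show "f (m + h) * cnj (f m) = e (of_int (poly (dpoly h p) m) / real q)"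
      unfolding f_def by (simp add: e_diff)
  qed
  finally have eq: "complex_of_real (norm (Ssum q p lo hi) ^ 2) =
     (\<Sum>h\<in>Rg H. Ssum q (dpoly h p) (max lo (lo - h)) (min hi (hi - h)))" .
  have "norm (Ssum q p lo hi) ^ 2 = norm (complex_of_real (norm (Ssum q p lo hi) ^ 2))"
    by (simp only: norm_of_real abs_power2 abs_norm_cancel)
  also have "\<dots> \<le> (\<Sum>h\<in>Rg H. norm (Ssum q (dpoly h p) (max lo (lo - h)) (min hi (hi - h))))"
    unfolding eq by (rule norm_sum)
  finally show ?thesis .
qed

lemma two_pow_ge: "Suc j \<le> 2 ^ j"
  by (induction j) auto

lemma weyl:
  assumes "degree p \<le> Suc j" and "hi - lo < int H" and "H \<ge> 1"
  shows "norm (Ssum q p lo hi) ^ (2^j) \<le> (2 * real H) ^ (2^j - j - 1) * Gen H j (coeff p (Suc j)) (Phi q H)"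
  using assms(1,2)
proof (induction j arbitrary: p lo hi)
  case 0
  then show ?case using Ssum_linear[of p hi lo H q] by simp
next
  case (Suc j)
  define c where "c = coeff p (Suc (Suc j))"
  define J1 where "J1 h = max lo (lo - h)" for h
  define J2 where "J2 h = min hi (hi - h)" for h
  define K where "K = (2 * real H) ^ (2^j - j - 1)"
  have dh: "degree (dpoly h p) \<le> Suc j" "coeff (dpoly h p) (Suc j) = int (j + 2) * h * c" for h
    using dpoly_deg[OF Suc.prems(1), of h] unfolding c_def by auto
  have len: "J2 h - J1 h < int H" for h unfolding J1_def J2_def using Suc.prems(2) by auto
  have IH: "norm (Ssum q (dpoly h p) (J1 h) (J2 h)) ^ (2^j) \<le> K * Gen H j (int (j + 2) * h * c) (Phi q H)" for h
    using Suc.IH[OF dh(1) len] dh(2) unfolding K_def by simp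
  have "norm (Ssum q p lo hi) ^ (2 ^ Suc j) = (norm (Ssum q p lo hi) ^ 2) ^ (2^j)"
    by (simp add: power_mult[symmetric])
  also have "\<dots> \<le> (\<Sum>h\<in>Rg H. norm (Ssum q (dpoly h p) (J1 h) (J2 h))) ^ (2^j)"
    using weyl_step[OF Suc.prems(2), of q p] unfolding J1_def J2_def by (intro power_mono) auto
  also have "\<dots> \<le> real (card (Rg H)) ^ (2^j - 1) * (\<Sum>h\<in>Rg H. norm (Ssum q (dpoly h p) (J1 h) (J2 h)) ^ (2^j))"
    by (rule pow_mean) (auto simp: Rg_def)
  also have "\<dots> \<le> (2 * real H) ^ (2^j - 1) * (\<Sum>h\<in>Rg H. K * Gen H j (int (j + 2) * h * c) (Phi q H))"
  proof (rule mult_mono)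
    show "real (card (Rg H)) ^ (2 ^ j - 1) \<le> (2 * real H) ^ (2 ^ j - 1)"
      by (rule power_mono) (use card_Rg[of H] in auto)
    show "(\<Sum>h\<in>Rg H. norm (Ssum q (dpoly h p) (J1 h) (J2 h)) ^ 2 ^ j) \<le> (\<Sum>h\<in>Rg H. K * Gen H j (int (j + 2) * h * c) (Phi q H))"
      by (rule sum_mono[OF IH])
  qed (auto intro: sum_nonneg)
  also have "\<dots> = (2 * real H) ^ (2^j - 1) * K * Gen H (Suc j) c (Phi q H)"
    by (simp add: sum_distrib_left mult.assoc)
  also have "\<dots> = (2 * real H) ^ (2 ^ Suc j - Suc j - 1) * Gen H (Suc j) c (Phi q H)"
  proof -
    have "2^j - 1 + (2^j - j - 1) = 2 ^ Suc j - Suc j - (1::nat)" using two_pow_ge[of j] by simp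
    then have "(2 * real H) ^ (2^j - 1) * K = (2 * real H) ^ (2 ^ Suc j - Suc j - 1)"
      unfolding K_def by (metis power_add)
    then show ?thesis by simp
  qed
  finally show ?case unfolding c_def .
qed


lemma Gen_mono: "(\<And>x. \<phi> x \<le> \<psi> x) \<Longrightarrow> Gen H j c \<phi> \<le> Gen H j c \<psi>"
  by (induction j arbitrary: c) (auto intro: sum_mono)

lemma Gen_add: "Gen H j c (\<lambda>x. \<phi> x + \<psi> x) = Gen H j c \<phi> + Gen H j c \<psi>"
  by (induction j arbitrary: c) (auto simp: sum.distrib)

lemma Gen_scale: "Gen H j c (\<lambda>x. a * \<phi> x) = a * Gen H j c \<phi>"
  by (induction j arbitrary: c) (auto simp: sum_distrib_left)

lemma Gen_const: "Gen H j c (\<lambda>_. a) = real (card (Rg H)) ^ j * a"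
  by (induction j arbitrary: c) (auto simp: algebra_simps)

lemma Gen_zero_arg: "Gen H j 0 \<phi> = real (card (Rg H)) ^ j * \<phi> 0"
  by (induction j) (auto simp: algebra_simps)

lemma Gen_nonneg: "(\<And>x. \<phi> x \<ge> 0) \<Longrightarrow> Gen H j c \<phi> \<ge> 0"
  by (induction j arbitrary: c) (auto intro: sum_nonneg)

lemma zero_Rg: "H \<ge> 1 \<Longrightarrow> (0::int) \<in> Rg H"
  unfolding Rg_def by auto

lemma Gen_zero_count:
  assumes "c \<noteq> 0" "H \<ge> 1"
  shows "Gen H j c (\<lambda>x. if x = 0 then 1 else 0) \<le> real j * (2 * real H) ^ (j - 1)"
  using assms(1)
proof (induction j arbitrary: c)
  case 0
  then show ?case by simp
next
  case (Suc j)
  define A :: real where "A = (2 * real H) ^ j"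
  define B :: real where "B = real j * (2 * real H) ^ (j - 1)"
  have B0: "B \<ge> 0" unfolding B_def by simp
  have t: "Gen H j (int (j + 2) * h * c) (\<lambda>x. if x = 0 then 1 else 0) \<le> (if h = 0 then A else 0) + B" for h
  proof (cases "h = 0")
    case True
    have "real (card (Rg H)) ^ j \<le> (2 * real H) ^ j"
      by (rule power_mono) (use card_Rg[of H] in auto)
    then show ?thesis using True B0 by (simp add: Gen_zero_arg A_def)
  next
    case False
    then have "int (j + 2) * h * c \<noteq> 0" using Suc.prems by simp
    then show ?thesis using Suc.IH False unfolding B_def by simp
  qed
  have "Gen H (Suc j) c (\<lambda>x. if x = 0 then 1 else 0) \<le> (\<Sum>h\<in>Rg H. (if h = 0 then A else 0) + B)"
    unfolding Gen.simps by (rule sum_mono, rule t)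
  also have "\<dots> = A + real (card (Rg H)) * B"
    using zero_Rg[OF assms(2)] by (simp add: sum.distrib Rg_def)
  also have "\<dots> \<le> A + (2 * real H) * B"
    by (rule add_left_mono, rule mult_right_mono) (use card_Rg[of H] B0 in auto)
  also have "\<dots> = real (Suc j) * (2 * real H) ^ (Suc j - 1)"
    unfolding A_def B_def by (cases j) (auto simp: algebra_simps)
  finally show ?case .
qed

lemma sum_if_card: "finite A \<Longrightarrow> (\<Sum>h\<in>A. if P h then a else 0) = real (card {h\<in>A. P h}) * (a::real)"
  by (simp add: sum.inter_filter[symmetric])

lemma Gen_div:
  assumes nn: "\<And>x. \<phi> x \<ge> 0" and z: "\<phi> 0 = 0" and D0: "Dm \<ge> 0"
    and D: "\<And>m. m \<noteq> 0 \<Longrightarrow> \<bar>m\<bar> \<le> B \<Longrightarrow> real (card {h\<in>Rg H. h \<noteq> 0 \<and> h dvd m}) \<le> Dm"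
  shows "\<bar>c\<bar> * int (fact (Suc j) * H^j) \<le> B \<Longrightarrow>
         Gen H j c \<phi> \<le> Dm^j * (\<Sum>m\<in>{-B..B}. if c dvd m then \<phi> m else 0)"
proof (induction j arbitrary: c)
  case 0
  show ?case
  proof (cases "c = 0")
    case True
    then show ?thesis using z nn by (auto intro: sum_nonneg)
  next
    case False
    have "c \<in> {-B..B}" using 0 by auto
    then have "(if c dvd c then \<phi> c else 0) \<le> (\<Sum>m\<in>{-B..B}. if c dvd m then \<phi> m else 0)"
      by (intro member_le_sum) (auto intro: nn)
    then show ?thesis by simp
  qed
next
  case (Suc j)
  define ch where "ch h = int (j + 2) * h * c" for h
  have bnd: "\<bar>ch h\<bar> * int (fact (Suc j) * H^j) \<le> B" if h: "h \<in> Rg H" for h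
  proof -
    have hH: "\<bar>h\<bar> \<le> int H" using h unfolding Rg_def by auto
    have "\<bar>ch h\<bar> = int (j + 2) * \<bar>h\<bar> * \<bar>c\<bar>" unfolding ch_def by (simp add: abs_mult)
    also have "\<dots> \<le> int (j + 2) * int H * \<bar>c\<bar>"
      by (intro mult_right_mono mult_left_mono hH) auto
    finally have "\<bar>ch h\<bar> * int (fact (Suc j) * H^j) \<le> int (j + 2) * int H * \<bar>c\<bar> * int (fact (Suc j) * H^j)"
      by (intro mult_right_mono) auto
    also have "\<dots> = \<bar>c\<bar> * int (fact (Suc (Suc j)) * H ^ Suc j)"
      by (simp add: algebra_simps)
    finally show ?thesis using Suc.prems by linarith
  qed
  have "Gen H (Suc j) c \<phi> = (\<Sum>h\<in>Rg H. Gen H j (ch h) \<phi>)" by (simp add: ch_def)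
  also have "\<dots> \<le> (\<Sum>h\<in>Rg H. Dm^j * (\<Sum>m\<in>{-B..B}. if ch h dvd m then \<phi> m else 0))"
    by (rule sum_mono, rule Suc.IH, rule bnd)
  also have "\<dots> = Dm^j * (\<Sum>m\<in>{-B..B}. \<Sum>h\<in>Rg H. if ch h dvd m then \<phi> m else 0)"
    by (simp add: sum_distrib_left sum.swap[of _ "Rg H"])
  also have "\<dots> \<le> Dm^j * (\<Sum>m\<in>{-B..B}. Dm * (if c dvd m then \<phi> m else 0))"
  proof (rule mult_left_mono[OF sum_mono])
    fix m assume m: "m \<in> {-B..B}"
    have eq: "(\<Sum>h\<in>Rg H. if ch h dvd m then \<phi> m else 0) = real (card {h\<in>Rg H. ch h dvd m}) * \<phi> m"
      by (rule sum_if_card) (simp add: Rg_def)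
    show "(\<Sum>h\<in>Rg H. if ch h dvd m then \<phi> m else 0) \<le> Dm * (if c dvd m then \<phi> m else 0)"
    proof (cases "m = 0")
      case True
      then show ?thesis unfolding eq using z by simp
    next
      case mnz: False
      show ?thesis
      proof (cases "c dvd m")
        case False
        have emp: "{h\<in>Rg H. ch h dvd m} = {}"
        proof -
          have cd: "c dvd ch h" for h unfolding ch_def by simp
          have "ch h dvd m \<Longrightarrow> c dvd m" for h using dvd_trans[OF cd] by blast
          then show ?thesis using False by auto
        qed
        show ?thesis unfolding eq emp using False by simp
      next
        case True
        have sub: "{h\<in>Rg H. ch h dvd m} \<subseteq> {h\<in>Rg H. h \<noteq> 0 \<and> h dvd m}"
        proof
          fix h assume "h \<in> {h\<in>Rg H. ch h dvd m}"
          then have a: "ch h dvd m" "h \<in> Rg H" by auto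
          have "h dvd ch h" unfolding ch_def by simp
          then have "h dvd m" using a dvd_trans by blast
          moreover have "h \<noteq> 0" using a mnz unfolding ch_def by auto
          ultimately show "h \<in> {h\<in>Rg H. h \<noteq> 0 \<and> h dvd m}" using a by simp
        qed
        have "real (card {h\<in>Rg H. ch h dvd m}) \<le> real (card {h\<in>Rg H. h \<noteq> 0 \<and> h dvd m})"
        proof (intro of_nat_mono card_mono sub)
          show "finite {h\<in>Rg H. h \<noteq> 0 \<and> h dvd m}" by (rule finite_subset[of _ "Rg H"]) (auto simp: Rg_def)
        qed
        also have "\<dots> \<le> Dm" using D[OF mnz] m by auto
        finally show ?thesis unfolding eq using True nn[of m] by (simp add: mult_right_mono)
      qed
    qed
  qed (use D0 in simp)
  also have "\<dots> = Dm ^ Suc j * (\<Sum>m\<in>{-B..B}. if c dvd m then \<phi> m else 0)"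
    by (simp add: sum_distrib_left[symmetric] mult.assoc)
  finally show ?case .
qed


lemma sin_ge_third:
  fixes x :: real
  assumes "0 \<le> x" "x \<le> 2"
  shows "sin x \<ge> x / 3"
proof -
  have "\<bar>sin x - (\<Sum>m<3. sin_coeff m * x ^ m)\<bar> \<le> inverse (fact 3) * \<bar>x\<bar> ^ 3"
    by (rule Maclaurin_sin_bound)
  moreover have "(\<Sum>m<3. sin_coeff m * x ^ m) = x"
    by (simp add: numeral_3_eq_3 sin_coeff_def)
  moreover have "inverse (fact 3) * \<bar>x\<bar> ^ 3 = x^3 / 6" using assms by (simp add: fact_numeral field_simps)
  ultimately have "\<bar>sin x - x\<bar> \<le> x^3 / 6" by simp
  then have "sin x \<ge> x - x^3 / 6" by linarith
  moreover have "x^3 \<le> 4 * x"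
  proof -
    have "x^2 \<le> 2^2" using assms by (intro power_mono) auto
    then have "x * x^2 \<le> x * 4" using assms by (intro mult_left_mono) auto
    then show ?thesis by (simp add: power3_eq_cube power2_eq_square algebra_simps)
  qed
  ultimately show ?thesis by linarith
qed

lemma abs_sin_shift_pi: "\<bar>sin (x + pi * of_int k)\<bar> = \<bar>sin x\<bar>"
proof -
  have c: "\<bar>cos (pi * of_int k)\<bar> = 1"
  proof -
    have "(cos (pi * of_int k))^2 = 1" using sin_cos_squared_add[of "pi * of_int k"] by simp
    then show ?thesis by (simp add: power2_eq_1_iff abs_if)
  qed
  show ?thesis by (simp add: sin_add abs_mult c)
qed

lemma abs_sin_mod:
  assumes "q > 0"
  shows "\<bar>sin (pi * of_int m / real q)\<bar> = \<bar>sin (pi * of_int (m mod int q) / real q)\<bar>"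
proof -
  have e0: "real_of_int ((m div int q) * int q + m mod int q) = real_of_int m" by simp
  have e1: "real_of_int m = real_of_int (m div int q) * real q + real_of_int (m mod int q)"
    unfolding e0[symmetric] by (simp only: of_int_add of_int_mult of_int_of_nat_eq)
  have "pi * of_int m / real q = pi * of_int (m mod int q) / real q + pi * of_int (m div int q)"
    unfolding e1 using assms by (simp add: field_simps)
  then show ?thesis using abs_sin_shift_pi by simp
qed

lemma bad_res:
  assumes "q > 0" "0 \<le> r" "r < int q" "\<bar>sin (pi * of_int r / real q)\<bar> < s"
  shows "of_int r < s * real q \<or> real q - of_int r < s * real q"
proof (cases "2 * r \<le> int q")
  case True
  define x where "x = pi * of_int r / real q"
  have x0: "0 \<le> x" unfolding x_def using assms by simp
  have "x \<le> pi / 2" unfolding x_def using True assms by (simp add: field_simps)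
  then have x2: "x \<le> 2" using pi_less_4 by simp
  have "sin x \<ge> x / 3" by (rule sin_ge_third[OF x0 x2])
  moreover have "x / 3 \<ge> of_int r / real q"
  proof -
    have "3 * of_int r \<le> pi * of_int r" using pi_gt3 assms by (intro mult_right_mono) auto
    then show ?thesis unfolding x_def using assms by (simp add: field_simps)
  qed
  ultimately have "of_int r / real q < s" using assms(4) x0 unfolding x_def by auto
  then show ?thesis using assms by (simp add: field_simps)
next
  case False
  define x where "x = pi * (real q - of_int r) / real q"
  have x0: "0 \<le> x" unfolding x_def using assms by simp
  have "x \<le> pi / 2" unfolding x_def using False assms by (simp add: field_simps)
  then have x2: "x \<le> 2" using pi_less_4 by simp
  have sx: "sin x = sin (pi * of_int r / real q)"
  proof -
    have "x = pi - pi * of_int r / real q" unfolding x_def using assms by (simp add: field_simps)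
    then show ?thesis by simp
  qed
  have "sin x \<ge> x / 3" by (rule sin_ge_third[OF x0 x2])
  moreover have "x / 3 \<ge> (real q - of_int r) / real q"
  proof -
    have "3 * (real q - of_int r) \<le> pi * (real q - of_int r)" using pi_gt3 assms by (intro mult_right_mono) auto
    then have a: "3 * (real q - of_int r) / (3 * real q) \<le> pi * (real q - of_int r) / (3 * real q)"
      by (intro divide_right_mono) auto
    have eq1: "(real q - of_int r) / real q = 3 * (real q - of_int r) / (3 * real q)"
      by (metis mult_divide_mult_cancel_left_if zero_neq_numeral)
    have eq2: "x / 3 = pi * (real q - of_int r) / (3 * real q)" unfolding x_def by simp
    show ?thesis unfolding eq1 eq2 by (rule a)
  qed
  moreover have "sin x \<le> \<bar>sin (pi * of_int r / real q)\<bar>" using sx by simp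
  ultimately have "(real q - of_int r) / real q < s" using assms(4) by linarith
  then show ?thesis using assms by (simp add: field_simps)
qed

lemma card_residues:
  assumes "q > 0" "s > 0"
  shows "real (card {r\<in>{0..<int q}. of_int r < s * real q \<or> real q - of_int r < s * real q}) \<le> 2 * s * real q + 2"
proof -
  define k where "k = \<lceil>s * real q\<rceil>"
  have "s * real q > 0" using assms by simp
  then have k0: "k \<ge> 0" unfolding k_def by linarith
  have "{r\<in>{0..<int q}. of_int r < s * real q \<or> real q - of_int r < s * real q} \<subseteq> {0..<k} \<union> {int q - k + 1..<int q}"
  proof
    fix r assume "r \<in> {r\<in>{0..<int q}. of_int r < s * real q \<or> real q - of_int r < s * real q}"
    then have r: "0 \<le> r" "r < int q" "of_int r < s * real q \<or> real q - of_int r < s * real q" by auto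
    have "r < k \<or> int q - r < k"
    proof -
      have "of_int r < s * real q \<Longrightarrow> r < k" unfolding k_def by linarith
      moreover have "real q - of_int r < s * real q \<Longrightarrow> int q - r < k" unfolding k_def by linarith
      ultimately show ?thesis using r(3) by blast
    qed
    then show "r \<in> {0..<k} \<union> {int q - k + 1..<int q}" using r by auto
  qed
  then have "card {r\<in>{0..<int q}. of_int r < s * real q \<or> real q - of_int r < s * real q} \<le> card ({0..<k} \<union> {int q - k + 1..<int q})"
    by (intro card_mono) auto
  also have "\<dots> \<le> card {0..<k} + card {int q - k + 1..<int q}" by (rule card_Un_le)
  also have "\<dots> \<le> nat k + nat k" by simp
  finally have "real (card {r\<in>{0..<int q}. of_int r < s * real q \<or> real q - of_int r < s * real q}) \<le> 2 * real (nat k)"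
    by linarith
  also have "\<dots> \<le> 2 * s * real q + 2" unfolding k_def using k0 k_def by linarith
  finally show ?thesis .
qed

lemma card_bad:
  assumes "q > 0" "s > 0" "B \<ge> 0"
  shows "real (card {m\<in>{-B..B}. \<bar>sin (pi * of_int m / real q)\<bar> < s}) \<le> (2 * of_int B / real q + 2) * (2 * s * real q + 2)"
proof -
  define A where "A = {r\<in>{0..<int q}. of_int r < s * real q \<or> real q - of_int r < s * real q}"
  define Q where "Q = {(-B) div int q .. B div int q}"
  have sub: "(\<lambda>m. (m div int q, m mod int q)) ` {m\<in>{-B..B}. \<bar>sin (pi * of_int m / real q)\<bar> < s} \<subseteq> Q \<times> A"
  proof safe
    fix m assume m: "m \<in> {-B..B}" "\<bar>sin (pi * of_int m / real q)\<bar> < s"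
    show "m div int q \<in> Q" unfolding Q_def using m(1) assms by (auto intro: zdiv_mono1)
    have r: "0 \<le> m mod int q" "m mod int q < int q" using assms by auto
    show "m mod int q \<in> A" unfolding A_def
      using bad_res[OF assms(1) r, of s] m(2) abs_sin_mod[OF assms(1), of m] r by auto
  qed
  have inj: "inj_on (\<lambda>m. (m div int q, m mod int q)) {m\<in>{-B..B}. \<bar>sin (pi * of_int m / real q)\<bar> < s}"
    by (rule inj_onI) (metis div_mult_mod_eq prod.inject)
  have "card {m\<in>{-B..B}. \<bar>sin (pi * of_int m / real q)\<bar> < s} \<le> card (Q \<times> A)"
  proof -
    have "finite A" unfolding A_def by (rule finite_subset[of _ "{0..<int q}"]) auto
    then have "finite (Q \<times> A)" unfolding Q_def by auto
    then show ?thesis using card_mono[OF _ sub] card_image[OF inj] by simp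
  qed
  also have "\<dots> = card Q * card A" by (rule card_cartesian_product)
  finally have c1: "real (card {m\<in>{-B..B}. \<bar>sin (pi * of_int m / real q)\<bar> < s}) \<le> real (card Q) * real (card A)"
    by (metis of_nat_mono of_nat_mult)
  have cA: "real (card A) \<le> 2 * s * real q + 2" unfolding A_def by (rule card_residues[OF assms(1,2)])
  have cQ: "real (card Q) \<le> 2 * of_int B / real q + 2"
  proof -
    have f1: "real_of_int (B div int q) = of_int \<lfloor>of_int B / real q\<rfloor>"
      using floor_divide_of_int_eq[of B "int q", where 'a=real] by simp
    have f2: "real_of_int ((-B) div int q) = of_int \<lfloor>of_int (-B) / real q\<rfloor>"
      using floor_divide_of_int_eq[of "-B" "int q", where 'a=real] by simp
    have "real_of_int (B div int q) \<le> of_int B / real q" unfolding f1 by linarith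
    moreover have "real_of_int ((-B) div int q) \<ge> - of_int B / real q - 1" unfolding f2 by simp
    moreover have "real (card Q) = of_int (max 0 (B div int q - (-B) div int q + 1))"
      unfolding Q_def by simp
    ultimately have a: "real_of_int (B div int q - (-B) div int q + 1) \<le> 2 * of_int B / real q + 2"
      "real (card Q) = max 0 (real_of_int (B div int q - (-B) div int q + 1))"
      by simp_all
    have "0 \<le> 2 * of_int B / real q" using assms by simp
    then have "0 \<le> 2 * of_int B / real q + 2" by linarith
    then show ?thesis using a by linarith
  qed
  have "real (card Q) * real (card A) \<le> (2 * of_int B / real q + 2) * (2 * s * real q + 2)"
  proof (intro mult_mono cQ cA)
    have "0 \<le> 2 * of_int B / real q" using assms by simp
    then show "0 \<le> 2 * of_int B / real q + 2" by linarith
  qed auto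
  then show ?thesis using c1 by linarith
qed


lemma tau_submult:
  fixes m n :: nat
  assumes "m > 0" "n > 0"
  shows "card {d. d dvd m * n} \<le> card {d. d dvd m} * card {d. d dvd n}"
proof -
  have "{d. d dvd m * n} \<subseteq> (\<lambda>(a, b). a * b) ` ({d. d dvd m} \<times> {d. d dvd n})"
  proof
    fix d assume "d \<in> {d. d dvd m * n}"
    then obtain a b where "d = a * b" "a dvd m" "b dvd n" using division_decomp by blast
    then show "d \<in> (\<lambda>(a, b). a * b) ` ({d. d dvd m} \<times> {d. d dvd n})" by force
  qed
  moreover have fm: "finite {d. d dvd m}" "finite {d. d dvd n}" using assms by (auto intro: finite_divisors_nat)
  ultimately have "card {d. d dvd m * n} \<le> card ((\<lambda>(a, b). a * b) ` ({d. d dvd m} \<times> {d. d dvd n}))"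
    by (intro card_mono) auto
  also have "\<dots> \<le> card ({d. d dvd m} \<times> {d. d dvd n})" by (rule card_image_le) (use fm in auto)
  also have "\<dots> = card {d. d dvd m} * card {d. d dvd n}" by (rule card_cartesian_product)
  finally show ?thesis .
qed

lemma tau_primepow:
  fixes p :: nat
  assumes "prime p"
  shows "card {d. d dvd p ^ a} \<le> a + 1"
proof -
  have "{d. d dvd p ^ a} = (\<lambda>i. p ^ i) ` {0..a}"
    using divides_primepow_nat[OF assms] by auto
  then have "card {d. d dvd p ^ a} \<le> card {0..a}" by (metis card_image_le finite_atLeastAtMost)
  then show ?thesis by simp
qed

lemma exp_lin_bound:
  fixes \<rho> :: real
  assumes "\<rho> > 0"
  shows "real a + 1 \<le> max 1 (1 / (\<rho> * ln 2)) * 2 powr (real a * \<rho>)"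
proof -
  define c where "c = \<rho> * ln 2"
  have c0: "c > 0" unfolding c_def using assms by simp
  have "2 powr (real a * \<rho>) = exp (real a * c)" unfolding c_def by (simp add: powr_def algebra_simps)
  also have "\<dots> \<ge> 1 + real a * c" by (rule exp_ge_add_one_self)
  finally have ge: "2 powr (real a * \<rho>) \<ge> 1 + real a * c" .
  show ?thesis
  proof (cases "c \<ge> 1")
    case True
    have "real a + 1 \<le> 1 + real a * c" using True by (simp add: mult_left_mono[of 1 c "real a", simplified])
    also have "\<dots> \<le> 2 powr (real a * \<rho>)" by (rule ge)
    also have "\<dots> \<le> max 1 (1 / (\<rho> * ln 2)) * 2 powr (real a * \<rho>)"
      using mult_right_mono[of 1 "max 1 (1 / (\<rho> * ln 2))" "2 powr (real a * \<rho>)"] by simp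
    finally show ?thesis .
  next
    case False
    have "real a + 1 \<le> (1 / c) * (1 + real a * c)"
      using False c0 by (simp add: field_simps)
    also have "\<dots> \<le> (1 / c) * 2 powr (real a * \<rho>)" by (rule mult_left_mono[OF ge]) (use c0 in simp)
    also have "\<dots> \<le> max 1 (1 / (\<rho> * ln 2)) * 2 powr (real a * \<rho>)"
      by (intro mult_right_mono) (auto simp: c_def)
    finally show ?thesis .
  qed
qed

lemma divisor_bound_aux:
  fixes \<rho> :: real
  assumes "\<rho> > 0"
  defines "Bc \<equiv> max 1 (1 / (\<rho> * ln 2))"
  defines "P0 \<equiv> 2 powr (1 / \<rho>)"
  shows "n > 0 \<Longrightarrow> real (card {d. d dvd n}) \<le> Bc ^ card {p. prime p \<and> p dvd n \<and> real p < P0} * real n powr \<rho>"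
proof (induction n rule: less_induct)
  case (less n)
  define s where "s k = card {p. prime p \<and> p dvd k \<and> real p < P0}" for k :: nat
  have Bc1: "Bc \<ge> 1" unfolding Bc_def by simp
  show ?case
  proof (cases "n = 1")
    case True
    then show ?thesis using Bc1 by simp
  next
    case False
    then obtain p where p: "prime p" "p dvd n" using prime_factor_nat by blast
    define a where "a = multiplicity p n"
    define m where "m = n div p ^ a"
    have n0: "n \<noteq> 0" using less.prems by simp
    have pa: "p ^ a dvd n" unfolding a_def by (rule multiplicity_dvd)
    have nm: "n = p ^ a * m" unfolding m_def using pa by simp
    have p2: "p \<ge> 2" using p(1) by (rule prime_ge_2_nat)
    have nu: "\<not> is_unit p" using p2 by simp
    have pm: "\<not> p dvd m" unfolding m_def a_def by (rule multiplicity_decompose[OF n0 nu])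
    have a1: "a \<ge> 1"
    proof (rule ccontr)
      assume "\<not> a \<ge> 1"
      then have "a = 0" by simp
      then have "m = n" unfolding m_def by simp
      then show False using pm p(2) by simp
    qed
    have m0: "m > 0" using nm less.prems by (cases "m = 0") auto
    have "p \<le> p ^ a" using p2 a1 by (intro self_le_power) auto
    then have "1 < p ^ a" using p2 by linarith
    then have "1 * m < p ^ a * m" using m0 by (intro mult_strict_right_mono) auto
    then have mn: "m < n" using nm by simp
    have IH: "real (card {d. d dvd m}) \<le> Bc ^ s m * real m powr \<rho>" using less.IH[OF mn m0] unfolding s_def .
    have fin: "finite {p. prime p \<and> p dvd k \<and> real p < P0}" if "k > 0" for k
      by (rule finite_subset[of _ "{d. d dvd k}"]) (use that in \<open>auto intro: finite_divisors_nat\<close>)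
    have sub: "{p. prime p \<and> p dvd m \<and> real p < P0} \<subseteq> {p. prime p \<and> p dvd n \<and> real p < P0}"
      using nm by auto
    have smn: "s m \<le> s n" unfolding s_def by (rule card_mono[OF fin[OF less.prems] sub])
    have tau: "real (card {d. d dvd n}) \<le> (real a + 1) * real (card {d. d dvd m})"
    proof -
      have "card {d. d dvd n} \<le> card {d. d dvd p ^ a} * card {d. d dvd m}"
        unfolding nm by (rule tau_submult) (use p2 m0 in auto)
      also have "\<dots> \<le> (a + 1) * card {d. d dvd m}" by (intro mult_right_mono tau_primepow p(1)) simp
      finally have "real (card {d. d dvd n}) \<le> real ((a + 1) * card {d. d dvd m})" by (rule of_nat_mono)
      then show ?thesis by (simp add: algebra_simps)
    qed
    have rp: "real p > 0" using p2 by simp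
    have ppow: "(real p powr \<rho>) ^ a = real p powr (real a * \<rho>)"
    proof -
      have "(real p powr \<rho>) ^ a = (real p powr \<rho>) powr real a" using rp by (simp add: powr_realpow)
      also have "\<dots> = real p powr (real a * \<rho>)" by (simp add: powr_powr mult.commute)
      finally show ?thesis .
    qed
    have npow: "real n powr \<rho> = real p powr (real a * \<rho>) * real m powr \<rho>"
    proof -
      have "real n powr \<rho> = (real p ^ a) powr \<rho> * real m powr \<rho>"
        unfolding nm by (simp add: powr_mult)
      also have "(real p ^ a) powr \<rho> = (real p powr \<rho>) ^ a"
        using rp by (simp add: powr_realpow[symmetric] powr_powr mult.commute)
      finally show ?thesis using ppow by simp
    qed
    have pp: "real p powr (real a * \<rho>) \<ge> 2 powr (real a * \<rho>)"
      using p2 assms by (intro powr_mono2) auto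
    show ?thesis
    proof (cases "real p < P0")
      case True
      have "s m + 1 \<le> s n"
      proof -
        have "p \<in> {p. prime p \<and> p dvd n \<and> real p < P0}" "p \<notin> {p. prime p \<and> p dvd m \<and> real p < P0}"
          using p True pm by auto
        then have "{p. prime p \<and> p dvd m \<and> real p < P0} \<subset> {p. prime p \<and> p dvd n \<and> real p < P0}"
          using sub by blast
        then have "card {p. prime p \<and> p dvd m \<and> real p < P0} < card {p. prime p \<and> p dvd n \<and> real p < P0}"
          by (rule psubset_card_mono[OF fin[OF less.prems]])
        then show ?thesis unfolding s_def by simp
      qed
      have "real (card {d. d dvd n}) \<le> (real a + 1) * (Bc ^ s m * real m powr \<rho>)"
        by (rule order_trans[OF tau mult_left_mono[OF IH]]) simp
      also have "\<dots> \<le> (Bc * real p powr (real a * \<rho>)) * (Bc ^ s m * real m powr \<rho>)"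
      proof (rule mult_right_mono)
        have "real a + 1 \<le> Bc * 2 powr (real a * \<rho>)" unfolding Bc_def by (rule exp_lin_bound[OF assms(1)])
        also have "\<dots> \<le> Bc * real p powr (real a * \<rho>)" using pp Bc1 by simp
        finally show "real a + 1 \<le> Bc * real p powr (real a * \<rho>)" .
      qed (use Bc1 in simp)
      also have "\<dots> = Bc ^ (s m + 1) * real n powr \<rho>" unfolding npow by (simp add: algebra_simps)
      also have "\<dots> \<le> Bc ^ s n * real n powr \<rho>"
        by (intro mult_right_mono power_increasing) (use Bc1 \<open>s m + 1 \<le> s n\<close> in auto)
      finally show ?thesis unfolding s_def .
    next
      case False
      have "Suc a \<le> 2 ^ a" by (induction a) auto
      then have "real (Suc a) \<le> real (2 ^ a)" by (rule of_nat_mono)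
      then have "real a + 1 \<le> 2 ^ a" by simp
      also have "\<dots> \<le> (real p powr \<rho>) ^ a"
      proof (rule power_mono)
        have "real p powr \<rho> \<ge> P0 powr \<rho>" using False assms by (intro powr_mono2) (auto simp: P0_def)
        moreover have "P0 powr \<rho> = 2" unfolding P0_def using assms by (simp add: powr_powr)
        ultimately show "2 \<le> real p powr \<rho>" by simp
      qed simp
      also have "\<dots> = real p powr (real a * \<rho>)" by (rule ppow)
      finally have ab: "real a + 1 \<le> real p powr (real a * \<rho>)" .
      have "real (card {d. d dvd n}) \<le> (real a + 1) * (Bc ^ s m * real m powr \<rho>)"
        by (rule order_trans[OF tau mult_left_mono[OF IH]]) simp
      also have "\<dots> \<le> real p powr (real a * \<rho>) * (Bc ^ s m * real m powr \<rho>)"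
        by (rule mult_right_mono[OF ab]) (use Bc1 in simp)
      also have "\<dots> = Bc ^ s m * real n powr \<rho>" unfolding npow by (simp add: algebra_simps)
      also have "\<dots> \<le> Bc ^ s n * real n powr \<rho>"
        by (intro mult_right_mono power_increasing) (use Bc1 smn in auto)
      finally show ?thesis unfolding s_def .
    qed
  qed
qed

lemma divisor_bound:
  fixes \<rho> :: real
  assumes "\<rho> > 0"
  shows "\<exists>C\<ge>1. \<forall>n::nat. n > 0 \<longrightarrow> real (card {d. d dvd n}) \<le> C * real n powr \<rho>"
proof -
  define Bc where "Bc = max 1 (1 / (\<rho> * ln 2))"
  define P0 where "P0 = (2::real) powr (1 / \<rho>)"
  define K where "K = nat \<lceil>P0\<rceil>"
  have Bc1: "Bc \<ge> 1" unfolding Bc_def by simp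
  show ?thesis
  proof (intro exI[of _ "Bc ^ K"] conjI allI impI)
    show "1 \<le> Bc ^ K" using Bc1 by simp
    fix n :: nat assume n: "n > 0"
    have "card {p. prime p \<and> p dvd n \<and> real p < P0} \<le> card {..<K}"
    proof (rule card_mono)
      show "{p. prime p \<and> p dvd n \<and> real p < P0} \<subseteq> {..<K}"
        unfolding K_def by (auto simp: less_ceiling_iff) linarith
    qed simp
    then have ck: "card {p. prime p \<and> p dvd n \<and> real p < P0} \<le> K" by simp
    have "real (card {d. d dvd n}) \<le> Bc ^ card {p. prime p \<and> p dvd n \<and> real p < P0} * real n powr \<rho>"
      using divisor_bound_aux[OF assms n] unfolding Bc_def P0_def .
    also have "\<dots> \<le> Bc ^ K * real n powr \<rho>"
      by (intro mult_right_mono power_increasing ck Bc1) simp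
    finally show "real (card {d. d dvd n}) \<le> Bc ^ K * real n powr \<rho>" .
  qed
qed


lemma int_divisor_bound:
  fixes \<rho> :: real
  assumes "\<rho> > 0"
  shows "\<exists>C\<ge>1. \<forall>m::int. m \<noteq> 0 \<longrightarrow> real (card {h::int. h \<noteq> 0 \<and> h dvd m}) \<le> C * real_of_int \<bar>m\<bar> powr \<rho>"
proof -
  obtain C where C: "C \<ge> 1" "\<And>n::nat. n > 0 \<Longrightarrow> real (card {d. d dvd n}) \<le> C * real n powr \<rho>"
    using divisor_bound[OF assms] by blast
  show ?thesis
  proof (intro exI[of _ "2 * C"] conjI allI impI)
    show "1 \<le> 2 * C" using C by simp
    fix m :: int assume m: "m \<noteq> 0"
    define D where "D = {d. d dvd nat \<bar>m\<bar>}"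
    have fD: "finite D" unfolding D_def by (rule finite_divisors_nat) (use m in simp)
    have sub: "{h::int. h \<noteq> 0 \<and> h dvd m} \<subseteq> int ` D \<union> (\<lambda>d. - int d) ` D"
    proof
      fix h assume h: "h \<in> {h::int. h \<noteq> 0 \<and> h dvd m}"
      then have "\<bar>h\<bar> dvd \<bar>m\<bar>" by simp
      then have "int (nat \<bar>h\<bar>) dvd int (nat \<bar>m\<bar>)" by simp
      then have dd: "nat \<bar>h\<bar> \<in> D" unfolding D_def by (simp only: int_dvd_int_iff mem_Collect_eq)
      show "h \<in> int ` D \<union> (\<lambda>d. - int d) ` D"
      proof (cases "h \<ge> 0")
        case True
        then have "h = int (nat \<bar>h\<bar>)" by simp
        then show ?thesis using dd by blast
      next
        case False
        then have "h = - int (nat \<bar>h\<bar>)" by simp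
        then show ?thesis using dd by blast
      qed
    qed
    have "card {h::int. h \<noteq> 0 \<and> h dvd m} \<le> card (int ` D \<union> (\<lambda>d. - int d) ` D)"
      by (rule card_mono[OF _ sub]) (use fD in auto)
    also have "\<dots> \<le> card (int ` D) + card ((\<lambda>d. - int d) ` D)" by (rule card_Un_le)
    also have "\<dots> \<le> card D + card D" by (intro add_mono card_image_le fD)
    finally have "real (card {h::int. h \<noteq> 0 \<and> h dvd m}) \<le> 2 * real (card D)" by linarith
    also have "\<dots> \<le> 2 * (C * real (nat \<bar>m\<bar>) powr \<rho>)" unfolding D_def using C(2)[of "nat \<bar>m\<bar>"] m by simp
    finally show "real (card {h::int. h \<noteq> 0 \<and> h dvd m}) \<le> 2 * C * real_of_int \<bar>m\<bar> powr \<rho>" by simp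
  qed
qed

lemma Phi_split:
  assumes "s > 0"
  shows "Phi q H x \<le> real H * (if x = 0 then 1 else 0)
           + real H * (if x \<noteq> 0 \<and> \<bar>sin (pi * of_int x / real q)\<bar> < s then 1 else 0) + 1 / s"
proof -
  have p1: "Phi q H x \<le> real H" unfolding Phi_def by auto
  have "1 / s \<ge> 0" using assms by simp
  then have p2: "Phi q H x \<le> real H + 1 / s" using p1 by linarith
  have p3: "\<bar>sin (pi * of_int x / real q)\<bar> \<ge> s \<Longrightarrow> Phi q H x \<le> 1 / s"
  proof -
    assume a: "\<bar>sin (pi * of_int x / real q)\<bar> \<ge> s"
    then have "sin (pi * of_int x / real q) \<noteq> 0" using assms by auto
    then have "Phi q H x \<le> 1 / \<bar>sin (pi * of_int x / real q)\<bar>" unfolding Phi_def by simp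
    also have "\<dots> \<le> 1 / s" using a assms by (intro divide_left_mono) auto
    finally show ?thesis .
  qed
  show ?thesis
  proof (cases "x = 0 \<or> \<bar>sin (pi * of_int x / real q)\<bar> < s")
    case True
    then have "real H * (if x = 0 then 1 else 0)
           + real H * (if x \<noteq> 0 \<and> \<bar>sin (pi * of_int x / real q)\<bar> < s then 1 else 0) + 1 / s = real H + 1 / s"
      by auto
    then show ?thesis using p2 by linarith
  next
    case False
    then show ?thesis using p3 by simp
  qed
qed

lemma G_raw:
  assumes q: "q \<ge> 1" and H: "H \<ge> 1" and s: "s > 0" and c: "c \<noteq> 0"
    and B: "B = \<bar>c\<bar> * int (fact (Suc j) * H^j)" and D0: "Dm \<ge> 0"
    and D: "\<And>m. m \<noteq> 0 \<Longrightarrow> \<bar>m\<bar> \<le> B \<Longrightarrow> real (card {h\<in>Rg H. h \<noteq> 0 \<and> h dvd m}) \<le> Dm"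
  shows "Gen H j c (Phi q H) \<le> real H * (real j * (2 * real H) ^ (j - 1))
          + real H * (Dm ^ j * ((2 * of_int B / real q + 2) * (2 * s * real q + 2)))
          + (1 / s) * (2 * real H) ^ j"
proof -
  define Z where "Z = (\<lambda>x::int. if x = 0 then 1 else (0::real))"
  define W where "W = (\<lambda>x::int. if x \<noteq> 0 \<and> \<bar>sin (pi * of_int x / real q)\<bar> < s then 1 else (0::real))"
  have "Gen H j c (Phi q H) \<le> Gen H j c (\<lambda>x. real H * Z x + real H * W x + 1 / s)"
    by (rule Gen_mono) (unfold Z_def W_def, rule Phi_split[OF s])
  also have "\<dots> = real H * Gen H j c Z + real H * Gen H j c W + (1 / s) * real (card (Rg H)) ^ j"
    by (simp add: Gen_add Gen_scale Gen_const)
  also have "\<dots> \<le> real H * (real j * (2 * real H) ^ (j - 1))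
          + real H * (Dm ^ j * ((2 * of_int B / real q + 2) * (2 * s * real q + 2)))
          + (1 / s) * (2 * real H) ^ j"
  proof (intro add_mono mult_left_mono)
    show "Gen H j c Z \<le> real j * (2 * real H) ^ (j - 1)" unfolding Z_def by (rule Gen_zero_count[OF c H])
    have "Gen H j c W \<le> Dm ^ j * (\<Sum>m\<in>{-B..B}. if c dvd m then W m else 0)"
      by (rule Gen_div[where B=B]) (auto simp: W_def D0 D B)
    also have "\<dots> \<le> Dm ^ j * real (card {m\<in>{-B..B}. \<bar>sin (pi * of_int m / real q)\<bar> < s})"
    proof (rule mult_left_mono)
      have "(\<Sum>m\<in>{-B..B}. if c dvd m then W m else 0) \<le> (\<Sum>m\<in>{-B..B}. if \<bar>sin (pi * of_int m / real q)\<bar> < s then 1 else 0)"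
        by (rule sum_mono) (auto simp: W_def)
      also have "\<dots> = real (card {m\<in>{-B..B}. \<bar>sin (pi * of_int m / real q)\<bar> < s})"
        by (simp add: sum_if_card)
      finally show "(\<Sum>m\<in>{-B..B}. if c dvd m then W m else 0) \<le> real (card {m\<in>{-B..B}. \<bar>sin (pi * of_int m / real q)\<bar> < s})" .
    qed (use D0 in simp)
    also have "\<dots> \<le> Dm ^ j * ((2 * of_int B / real q + 2) * (2 * s * real q + 2))"
      by (rule mult_left_mono[OF card_bad]) (use q s D0 B in auto)
    finally show "Gen H j c W \<le> Dm ^ j * ((2 * of_int B / real q + 2) * (2 * s * real q + 2))" .
    show "real (card (Rg H)) ^ j \<le> (2 * real H) ^ j" by (rule power_mono) (use card_Rg[of H] in auto)
  qed (use s in auto)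
  finally show ?thesis .
qed


lemma powr_pow_nat: "x > 0 \<Longrightarrow> (x powr a) ^ n = x powr (a * real n)"
  by (simp add: powr_realpow[symmetric] powr_powr)

lemma le_mult_powr_neg:
  fixes Q Y Z :: real
  assumes "Q > 0" "Y * Q powr m \<le> Z"
  shows "Y \<le> Z * Q powr (- m)"
proof -
  have "Y = (Y * Q powr m) * Q powr (- m)" using assms(1) by (simp add: powr_minus field_simps)
  also have "\<dots> \<le> Z * Q powr (- m)" by (rule mult_right_mono[OF assms(2)]) simp
  finally show ?thesis .
qed

lemma arith_main:
  fixes X Q \<epsilon>0 \<kappa> C1 :: real and j :: nat
  assumes Q1: "Q \<ge> 1" and X1: "X \<ge> 1" and j1: "j \<ge> 1" and e0: "\<epsilon>0 > 0"
    and th: "Q powr (1 / real (Suc j) + \<epsilon>0) \<le> 2 * X" and XQ: "X \<le> 2 * Q"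
    and ka: "\<kappa> \<ge> 1" and C1: "C1 \<ge> 1"
  defines "\<rho> \<equiv> \<epsilon>0 / (2 * real j ^ 2)"
  defines "\<mu> \<equiv> \<epsilon>0 / 4"
  defines "s \<equiv> Q powr \<mu> / X"
  defines "Dm \<equiv> C1 * (\<kappa> * X ^ j) powr \<rho>"
  defines "C2 \<equiv> (C1 * \<kappa> powr \<rho> * 2 powr (real j * \<rho>)) ^ j"
  shows "X * (real j * (2 * X) ^ (j - 1)) + X * (Dm ^ j * ((2 * (\<kappa> * X ^ j) / Q + 2) * (2 * s * Q + 2)))
           + (1 / s) * (2 * X) ^ j
         \<le> (real j * 2 ^ j + 2 ^ j + 24 * \<kappa> * C2 + 12 * 2 ^ Suc j * C2) * X ^ Suc j * Q powr (- \<mu>)"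
proof -
  have Q0: "Q > 0" and X0: "X > 0" using Q1 X1 by auto
  have rho0: "\<rho> > 0" unfolding \<rho>_def using e0 j1 by simp
  have mu0: "\<mu> > 0" unfolding \<mu>_def using e0 by simp
  define P where "P = X ^ Suc j * Q powr (- \<mu>)"
  have P0: "P > 0" unfolding P_def using X0 Q0 by simp
  have F6: "Q powr \<epsilon>0 \<le> 2 * X"
  proof -
    have "Q powr \<epsilon>0 \<le> Q powr (1 / real (Suc j) + \<epsilon>0)" using Q1 by (intro powr_mono) auto
    then show ?thesis using th by linarith
  qed
  have F4: "Q powr \<mu> \<le> 2 * X"
  proof -
    have "Q powr \<mu> \<le> Q powr \<epsilon>0" using Q1 e0 unfolding \<mu>_def by (intro powr_mono) auto
    then show ?thesis using F6 by linarith
  qed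
  have F3: "Q powr (1 + \<epsilon>0) \<le> 2 ^ Suc j * X ^ Suc j"
  proof -
    have "Q powr (1 + \<epsilon>0) \<le> Q powr ((1 / real (Suc j) + \<epsilon>0) * real (Suc j))"
      using Q1 e0 by (intro powr_mono) (auto simp: field_simps)
    also have "\<dots> = (Q powr (1 / real (Suc j) + \<epsilon>0)) ^ Suc j" by (simp only: powr_pow_nat[OF Q0])
    also have "\<dots> \<le> (2 * X) ^ Suc j" by (rule power_mono[OF th]) simp
    finally show ?thesis by (simp add: power_mult_distrib mult_ac)
  qed
  have F5: "Dm ^ j \<le> C2 * Q powr (\<epsilon>0 / 2)"
  proof -
    have "(\<kappa> * X ^ j) powr \<rho> \<le> (\<kappa> * (2 * Q) ^ j) powr \<rho>"
      using rho0 ka X1 XQ by (intro powr_mono2 mult_left_mono power_mono) auto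
    also have "\<dots> = \<kappa> powr \<rho> * 2 powr (real j * \<rho>) * Q powr (real j * \<rho>)"
      using ka Q0 by (simp add: powr_mult powr_realpow[symmetric] powr_powr power_mult_distrib)
    finally have "Dm \<le> C1 * \<kappa> powr \<rho> * 2 powr (real j * \<rho>) * Q powr (real j * \<rho>)"
      unfolding Dm_def using C1 by (simp add: mult.assoc mult_left_mono)
    then have "Dm ^ j \<le> (C1 * \<kappa> powr \<rho> * 2 powr (real j * \<rho>) * Q powr (real j * \<rho>)) ^ j"
      by (rule power_mono) (unfold Dm_def, use C1 in simp)
    also have "\<dots> = C2 * (Q powr (real j * \<rho>)) ^ j" unfolding C2_def by (simp add: power_mult_distrib)
    also have "(Q powr (real j * \<rho>)) ^ j = Q powr (\<epsilon>0 / 2)"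
      using Q0 j1 unfolding \<rho>_def by (simp add: powr_pow_nat power2_eq_square)
    finally show ?thesis .
  qed
  have C20: "C2 \<ge> 0" unfolding C2_def using C1 by simp
  have Dm0: "Dm \<ge> 0" unfolding Dm_def using C1 by simp
  have s0: "s > 0" unfolding s_def using Q0 X0 by simp
  have XjP: "X ^ j \<le> 2 * P"
  proof -
    have "X ^ j * Q powr \<mu> \<le> X ^ j * (2 * X)" by (rule mult_left_mono[OF F4]) (use X0 in simp)
    also have "\<dots> = 2 * X ^ Suc j" by simp
    finally have "X ^ j \<le> 2 * X ^ Suc j * Q powr (- \<mu>)" by (rule le_mult_powr_neg[OF Q0])
    then show ?thesis unfolding P_def by (simp add: mult.assoc)
  qed
  have T1: "X * (real j * (2 * X) ^ (j - 1)) \<le> real j * 2 ^ j * P"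
  proof -
    obtain k where k: "j = Suc k" using j1 by (cases j) auto
    have "X * (real j * (2 * X) ^ (j - 1)) = real j * 2 ^ k * X ^ j"
      unfolding k by (simp add: power_mult_distrib mult_ac)
    also have "\<dots> \<le> real j * 2 ^ k * (2 * P)" by (rule mult_left_mono[OF XjP]) simp
    also have "\<dots> = real j * 2 ^ j * P" unfolding k by simp
    finally show ?thesis .
  qed
  have T3: "(1 / s) * (2 * X) ^ j = 2 ^ j * P"
    unfolding s_def P_def using X0 Q0 by (simp add: powr_minus field_simps power_mult_distrib)
  have T2: "X * (Dm ^ j * ((2 * (\<kappa> * X ^ j) / Q + 2) * (2 * s * Q + 2))) \<le> (24 * \<kappa> * C2 + 12 * 2 ^ Suc j * C2) * P"
  proof -
    define E where "E = Q powr (\<epsilon>0 / 2)"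
    have QQ: "Q * Q powr \<mu> = Q powr (1 + \<mu>)" using Q0 by (simp add: powr_add)
    have A: "X * (2 * s * Q + 2) \<le> 6 * Q powr (1 + \<mu>)"
    proof -
      have "X * (2 * s * Q + 2) = 2 * (Q * Q powr \<mu>) + 2 * X" unfolding s_def using X0 by (simp add: field_simps)
      also have "\<dots> = 2 * Q powr (1 + \<mu>) + 2 * X" by (simp add: QQ)
      also have "\<dots> \<le> 6 * Q powr (1 + \<mu>)"
      proof -
        have "Q \<le> Q powr (1 + \<mu>)" using Q1 mu0 powr_mono[of 1 "1 + \<mu>" Q] by simp
        then show ?thesis using XQ by linarith
      qed
      finally show ?thesis .
    qed
    have Bn: "2 * (\<kappa> * X ^ j) / Q + 2 \<ge> 0" using ka X0 Q0 by (simp add: add_nonneg_nonneg)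
    have "X * (Dm ^ j * ((2 * (\<kappa> * X ^ j) / Q + 2) * (2 * s * Q + 2)))
          = Dm ^ j * ((2 * (\<kappa> * X ^ j) / Q + 2) * (X * (2 * s * Q + 2)))" by (simp add: mult_ac)
    also have "\<dots> \<le> (C2 * E) * ((2 * (\<kappa> * X ^ j) / Q + 2) * (6 * Q powr (1 + \<mu>)))"
    proof (rule mult_mono)
      show "Dm ^ j \<le> C2 * E" unfolding E_def by (rule F5)
      show "(2 * (\<kappa> * X ^ j) / Q + 2) * (X * (2 * s * Q + 2)) \<le> (2 * (\<kappa> * X ^ j) / Q + 2) * (6 * Q powr (1 + \<mu>))"
        by (rule mult_left_mono[OF A Bn])
      show "0 \<le> C2 * E" unfolding E_def using C20 by simp
      show "0 \<le> (2 * (\<kappa> * X ^ j) / Q + 2) * (X * (2 * s * Q + 2))"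
        using Bn s0 X0 Q0 by (intro mult_nonneg_nonneg) auto
    qed
    also have "\<dots> = 12 * \<kappa> * C2 * (X ^ j * (E * Q powr (1 + \<mu>) / Q)) + 12 * C2 * (E * Q powr (1 + \<mu>))"
      using Q0 by (simp add: field_simps)
    also have "\<dots> \<le> 12 * \<kappa> * C2 * (2 * P) + 12 * C2 * (2 ^ Suc j * P)"
    proof (rule add_mono)
      have e1: "E * Q powr (1 + \<mu>) / Q = Q powr (\<epsilon>0 / 2 + \<mu>)"
        unfolding E_def using Q0 by (simp add: powr_add[symmetric] powr_diff[symmetric] QQ[symmetric] field_simps)
      have "X ^ j * Q powr (\<epsilon>0 / 2 + \<mu>) * Q powr \<mu> = X ^ j * Q powr \<epsilon>0"
        unfolding \<mu>_def by (simp add: mult.assoc powr_add[symmetric])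
      also have "\<dots> \<le> X ^ j * (2 * X)" by (rule mult_left_mono[OF F6]) (use X0 in simp)
      also have "\<dots> = 2 * X ^ Suc j" by simp
      finally have "X ^ j * Q powr (\<epsilon>0 / 2 + \<mu>) \<le> 2 * X ^ Suc j * Q powr (- \<mu>)"
        by (rule le_mult_powr_neg[OF Q0])
      then have "X ^ j * (E * Q powr (1 + \<mu>) / Q) \<le> 2 * P" unfolding e1 P_def by (simp add: mult_ac)
      then show "12 * \<kappa> * C2 * (X ^ j * (E * Q powr (1 + \<mu>) / Q)) \<le> 12 * \<kappa> * C2 * (2 * P)"
        by (rule mult_left_mono) (use ka C20 in simp)
      have "E * Q powr (1 + \<mu>) * Q powr \<mu> = Q powr (1 + \<epsilon>0)"
        unfolding E_def \<mu>_def by (simp add: powr_add[symmetric] add.commute)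
      also have "\<dots> \<le> 2 ^ Suc j * X ^ Suc j" by (rule F3)
      finally have "E * Q powr (1 + \<mu>) \<le> 2 ^ Suc j * X ^ Suc j * Q powr (- \<mu>)"
        by (rule le_mult_powr_neg[OF Q0])
      then have "E * Q powr (1 + \<mu>) \<le> 2 ^ Suc j * P"
        unfolding P_def by (simp add: mult_ac)
      then show "12 * C2 * (E * Q powr (1 + \<mu>)) \<le> 12 * C2 * (2 ^ Suc j * P)"
        by (rule mult_left_mono) (use C20 in simp)
    qed
    also have "\<dots> = (24 * \<kappa> * C2 + 12 * 2 ^ Suc j * C2) * P" by (simp add: algebra_simps)
    finally show ?thesis .
  qed
  show ?thesis using T1 T2 T3 unfolding P_def by (simp add: algebra_simps)
qed


lemma main_bound:
  fixes g :: "int poly" and j :: nat and \<epsilon>0 :: real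
  assumes dg: "degree g = Suc j" and j1: "j \<ge> 1" and e0: "\<epsilon>0 > 0"
  shows "\<exists>K. \<forall>q H lo. q \<ge> 1 \<longrightarrow> H \<ge> 1 \<longrightarrow> real q powr (1 / real (Suc j) + \<epsilon>0) \<le> 2 * real H \<longrightarrow>
           real H \<le> 2 * real q \<longrightarrow>
           norm (Ssum q g lo (lo + int H - 1)) ^ (2^j) \<le> K * real H ^ (2^j) * real q powr (- (\<epsilon>0 / 4))"
proof -
  define c where "c = coeff g (Suc j)"
  have c0: "c \<noteq> 0" unfolding c_def using dg by (metis leading_coeff_0_iff nat.distinct(1) degree_0)
  define \<rho> where "\<rho> = \<epsilon>0 / (2 * real j ^ 2)"
  have rho0: "\<rho> > 0" unfolding \<rho>_def using e0 j1 by simp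
  obtain C1 where C1: "C1 \<ge> 1" "\<And>m::int. m \<noteq> 0 \<Longrightarrow> real (card {h::int. h \<noteq> 0 \<and> h dvd m}) \<le> C1 * real_of_int \<bar>m\<bar> powr \<rho>"
    using int_divisor_bound[OF rho0] by blast
  define \<kappa> where "\<kappa> = real_of_int \<bar>c\<bar> * fact (Suc j)"
  have ka: "\<kappa> \<ge> 1"
  proof -
    have "real_of_int \<bar>c\<bar> \<ge> 1" using c0 by linarith
    moreover have "(fact (Suc j) :: real) \<ge> 1" by (rule fact_ge_1)
    ultimately show ?thesis unfolding \<kappa>_def using mult_mono[of 1 "real_of_int \<bar>c\<bar>" 1 "fact (Suc j)"] by simp
  qed
  define \<mu> where "\<mu> = \<epsilon>0 / 4"
  define C2 where "C2 = (C1 * \<kappa> powr \<rho> * 2 powr (real j * \<rho>)) ^ j"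
  define K0 where "K0 = real j * 2 ^ j + 2 ^ j + 24 * \<kappa> * C2 + 12 * 2 ^ Suc j * C2"
  have K00: "K0 \<ge> 0" unfolding K0_def C2_def using ka C1 by simp
  show ?thesis
  proof (intro exI[of _ "2 ^ (2 ^ j) * K0"] allI impI)
    fix q H :: nat and lo :: int
    assume q1: "q \<ge> 1" and H1: "H \<ge> 1" and th: "real q powr (1 / real (Suc j) + \<epsilon>0) \<le> 2 * real H"
      and HQ: "real H \<le> 2 * real q"
    define X where "X = real H"
    define Q where "Q = real q"
    have X1: "X \<ge> 1" and Q1: "Q \<ge> 1" using H1 q1 unfolding X_def Q_def by auto
    define s where "s = Q powr \<mu> / X"
    have s0: "s > 0" unfolding s_def using X1 Q1 by simp
    define B where "B = \<bar>c\<bar> * int (fact (Suc j) * H ^ j)"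
    have rB: "real_of_int B = \<kappa> * X ^ j" unfolding B_def \<kappa>_def X_def by (simp add: algebra_simps)
    define Dm where "Dm = C1 * (\<kappa> * X ^ j) powr \<rho>"
    have Dm0: "Dm \<ge> 0" unfolding Dm_def using C1 by simp
    have D: "real (card {h\<in>Rg H. h \<noteq> 0 \<and> h dvd m}) \<le> Dm" if m: "m \<noteq> 0" "\<bar>m\<bar> \<le> B" for m
    proof -
      have fin: "finite {h::int. h \<noteq> 0 \<and> h dvd m}"
      proof (rule finite_subset[of _ "{-\<bar>m\<bar>..\<bar>m\<bar>}"])
        show "{h::int. h \<noteq> 0 \<and> h dvd m} \<subseteq> {-\<bar>m\<bar>..\<bar>m\<bar>}"
          using dvd_imp_le_int[OF m(1)] by fastforce
      qed simp
      have "real (card {h\<in>Rg H. h \<noteq> 0 \<and> h dvd m}) \<le> real (card {h::int. h \<noteq> 0 \<and> h dvd m})"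
        by (intro of_nat_mono card_mono fin) auto
      also have "\<dots> \<le> C1 * real_of_int \<bar>m\<bar> powr \<rho>" by (rule C1(2)[OF m(1)])
      also have "\<dots> \<le> C1 * real_of_int B powr \<rho>"
        using m rho0 C1 by (intro mult_left_mono powr_mono2) auto
      finally show ?thesis unfolding Dm_def rB .
    qed
    have G: "Gen H j c (Phi q H) \<le> K0 * X ^ Suc j * Q powr (- \<mu>)"
    proof -
      have "Gen H j c (Phi q H) \<le> real H * (real j * (2 * real H) ^ (j - 1))
          + real H * (Dm ^ j * ((2 * of_int B / real q + 2) * (2 * s * real q + 2)))
          + (1 / s) * (2 * real H) ^ j"
        by (rule G_raw[OF q1 H1 s0 c0 B_def Dm0 D])
      also have "\<dots> = X * (real j * (2 * X) ^ (j - 1)) + X * (Dm ^ j * ((2 * (\<kappa> * X ^ j) / Q + 2) * (2 * s * Q + 2)))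
           + (1 / s) * (2 * X) ^ j"
        unfolding rB X_def Q_def by simp
      also have "\<dots> \<le> K0 * X ^ Suc j * Q powr (- \<mu>)"
        unfolding K0_def s_def Dm_def C2_def \<mu>_def \<rho>_def
        by (rule arith_main[OF Q1 X1 j1 e0 _ _ ka C1(1)]) (use th HQ in \<open>simp_all add: X_def Q_def\<close>)
      finally show ?thesis .
    qed
    have W: "norm (Ssum q g lo (lo + int H - 1)) ^ (2^j) \<le> (2 * real H) ^ (2^j - j - 1) * Gen H j c (Phi q H)"
      unfolding c_def by (rule weyl) (use dg H1 in auto)
    also have "\<dots> \<le> (2 * X) ^ (2^j - j - 1) * (K0 * X ^ Suc j * Q powr (- \<mu>))"
      unfolding X_def by (rule mult_left_mono[OF G[unfolded X_def]]) simp
    also have "\<dots> = 2 ^ (2^j - j - 1) * K0 * X ^ (2^j) * Q powr (- \<mu>)"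
    proof -
      have "2^j - j - 1 + Suc j = (2::nat)^j" using two_pow_ge[of j] by simp
      then have "X ^ (2^j - j - 1) * X ^ Suc j = X ^ (2^j)" by (metis power_add)
      then show ?thesis by (simp add: power_mult_distrib mult_ac)
    qed
    also have "\<dots> \<le> 2 ^ (2^j) * K0 * X ^ (2^j) * Q powr (- \<mu>)"
    proof -
      have "(2::real) ^ (2^j - j - 1) \<le> 2 ^ (2^j)" by (rule power_increasing) auto
      then show ?thesis using K00 X1 by (intro mult_right_mono) auto
    qed
    finally show "norm (Ssum q g lo (lo + int H - 1)) ^ (2^j) \<le> 2 ^ (2^j) * K0 * real H ^ (2^j) * real q powr (- (\<epsilon>0 / 4))"
      unfolding X_def Q_def \<mu>_def .
  qed
qed


lemma poly_diff_dvd: "(a - b) dvd (poly (p :: int poly) a - poly p b)"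
proof (induction p)
  case (pCons c p)
  have "poly (pCons c p) a - poly (pCons c p) b = a * (poly p a - poly p b) + (a - b) * poly p b"
    by (simp add: algebra_simps)
  then show ?case using pCons.IH by simp
qed simp

lemma e_period:
  assumes "q > 0"
  shows "e (of_int (poly g (n + int q)) / real q) = e (of_int (poly g n) / real q)"
proof -
  have "int q dvd poly g (n + int q) - poly g n" using poly_diff_dvd[of "n + int q" n g] by simp
  then obtain k where k: "poly g (n + int q) - poly g n = int q * k" by (auto elim: dvdE)
  have "of_int (poly g (n + int q)) / real q = of_int (poly g n) / real q + of_int k"
  proof -
    have "real_of_int (poly g (n + int q)) = of_int (poly g n) + real q * of_int k"
      using k by (metis add.commute diff_eq_eq of_int_add of_int_mult of_int_of_nat_eq)
    then show ?thesis using assms by (simp add: field_simps)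
  qed
  then show ?thesis by (simp add: e_add)
qed

lemma sum_int_split:
  fixes F :: "int \<Rightarrow> 'a::comm_monoid_add"
  assumes "lo \<le> m + 1" "m \<le> hi"
  shows "(\<Sum>n\<in>{lo..hi}. F n) = (\<Sum>n\<in>{lo..m}. F n) + (\<Sum>n\<in>{m+1..hi}. F n)"
proof -
  have "{lo..hi} = {lo..m} \<union> {m+1..hi}" using assms by auto
  moreover have "{lo..m} \<inter> {m+1..hi} = {}" by auto
  ultimately show ?thesis by (simp add: sum.union_disjoint)
qed

lemma sum_shift_period:
  fixes F :: "int \<Rightarrow> complex"
  assumes per: "\<And>n. F (n + int q) = F n" and q: "q > 0"
  shows "(\<Sum>n\<in>{lo..lo + int q - 1}. F n) = (\<Sum>n\<in>{0..int q - 1}. F n)"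
proof -
  have step: "(\<Sum>n\<in>{i+1..i+1 + int q - 1}. F n) = (\<Sum>n\<in>{i..i + int q - 1}. F n)" for i
  proof -
    have "(\<Sum>n\<in>{i..i + int q}. F n) = (\<Sum>n\<in>{i..i}. F n) + (\<Sum>n\<in>{i+1..i + int q}. F n)"
      by (rule sum_int_split) (use q in auto)
    moreover have "(\<Sum>n\<in>{i..i + int q}. F n) = (\<Sum>n\<in>{i..i + int q - 1}. F n) + (\<Sum>n\<in>{i + int q..i + int q}. F n)"
      using sum_int_split[of i "i + int q - 1" "i + int q" F] q by simp
    ultimately show ?thesis using per[of i] by (simp add: add.commute)
  qed
  show ?thesis
  proof (induction lo rule: int_induct[where k=0])
    case base then show ?case by simp
  next
    case (step1 i) then show ?case using step[of i] by simp
  next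
    case (step2 i) then show ?case using step[of "i - 1"] by simp
  qed
qed


lemma main_bound2:
  fixes g :: "int poly" and j :: nat and \<epsilon>0 :: real
  assumes dg: "degree g = Suc j" and j1: "j \<ge> 1" and e0: "\<epsilon>0 > 0"
  shows "\<exists>K>0. \<forall>q H lo. q \<ge> 1 \<longrightarrow> H \<ge> 1 \<longrightarrow> real q powr (1 / real (Suc j) + \<epsilon>0) \<le> 2 * real H \<longrightarrow>
           real H \<le> 2 * real q \<longrightarrow>
           norm (Ssum q g lo (lo + int H - 1)) \<le> K * real H * real q powr (- (\<epsilon>0 / (4 * 2^j)))"
proof -
  obtain K where K: "\<And>q H lo. q \<ge> 1 \<Longrightarrow> H \<ge> 1 \<Longrightarrow> real q powr (1 / real (Suc j) + \<epsilon>0) \<le> 2 * real H \<Longrightarrow>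
           real H \<le> 2 * real q \<Longrightarrow>
           norm (Ssum q g lo (lo + int H - 1)) ^ (2^j) \<le> K * real H ^ (2^j) * real q powr (- (\<epsilon>0 / 4))"
    using main_bound[OF dg j1 e0] by blast
  define K1 where "K1 = max K 1"
  have K1: "K1 > 0" unfolding K1_def by simp
  define n :: nat where "n = 2^j"
  have n0: "n > 0" unfolding n_def by simp
  define K2 where "K2 = K1 powr (1 / real n)"
  show ?thesis
  proof (intro exI[of _ K2] conjI allI impI)
    show "K2 > 0" unfolding K2_def using K1 by simp
    fix q H :: nat and lo :: int
    assume a: "q \<ge> 1" "H \<ge> 1" "real q powr (1 / real (Suc j) + \<epsilon>0) \<le> 2 * real H" "real H \<le> 2 * real q"
    define y where "y = K2 * real H * real q powr (- (\<epsilon>0 / (4 * 2^j)))"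
    have y0: "y \<ge> 0" unfolding y_def K2_def by simp
    have "norm (Ssum q g lo (lo + int H - 1)) ^ n \<le> K * real H ^ n * real q powr (- (\<epsilon>0 / 4))"
      using K[OF a] unfolding n_def .
    also have "\<dots> \<le> K1 * real H ^ n * real q powr (- (\<epsilon>0 / 4))"
      unfolding K1_def by (intro mult_right_mono) auto
    also have "\<dots> = y ^ n"
    proof -
      have "K2 ^ n = K1" unfolding K2_def using K1 n0 by (simp add: powr_pow_nat)
      moreover have "(real q powr (- (\<epsilon>0 / (4 * 2^j)))) ^ n = real q powr (- (\<epsilon>0 / 4))"
        using a(1) unfolding n_def by (simp add: powr_pow_nat)
      ultimately show ?thesis unfolding y_def by (simp add: power_mult_distrib)
    qed
    finally have "norm (Ssum q g lo (lo + int H - 1)) ^ n \<le> y ^ n" .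
    moreover obtain m where m: "n = Suc m" using n0 by (cases n) auto
    ultimately have "norm (Ssum q g lo (lo + int H - 1)) ^ Suc m \<le> y ^ Suc m" by simp
    then have "norm (Ssum q g lo (lo + int H - 1)) \<le> y" by (rule power_le_imp_le_base[OF _ y0])
    then show "norm (Ssum q g lo (lo + int H - 1)) \<le> K2 * real H * real q powr (- (\<epsilon>0 / (4 * 2^j)))"
      unfolding y_def .
  qed
qed


lemma ext_bound:
  fixes g :: "int poly" and j :: nat and \<epsilon>0 :: real
  assumes dg: "degree g = Suc j" and j1: "j \<ge> 1" and e0: "\<epsilon>0 > 0" and e8: "\<epsilon>0 \<le> 1/8"
  shows "\<exists>K>0. \<forall>q L lo. q \<ge> 1 \<longrightarrow> real q powr (1 / real (Suc j) + \<epsilon>0) \<le> 2 * real L \<longrightarrow>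
           norm (Ssum q g lo (lo + int L - 1)) \<le> K * real L * real q powr (- (\<epsilon>0 / (4 * 2^j)))"
proof -
  define \<eta> where "\<eta> = \<epsilon>0 / (4 * 2^j)"
  define \<theta> where "\<theta> = 1 / real (Suc j) + \<epsilon>0"
  obtain K where K0: "K > 0" and K: "\<And>q H lo. q \<ge> 1 \<Longrightarrow> H \<ge> 1 \<Longrightarrow> real q powr \<theta> \<le> 2 * real H \<Longrightarrow>
           real H \<le> 2 * real q \<Longrightarrow> norm (Ssum q g lo (lo + int H - 1)) \<le> K * real H * real q powr (- \<eta>)"
    using main_bound2[OF dg j1 e0] unfolding \<eta>_def \<theta>_def by blast
  define M where "M = max K 1"
  have M1: "M \<ge> 1" "K \<le> M" unfolding M_def by auto
  have eta0: "\<eta> > 0" unfolding \<eta>_def using e0 by simp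
  have th0: "\<theta> \<ge> 0" unfolding \<theta>_def using e0 by simp
  have th1: "\<theta> \<le> 1 - \<eta>"
  proof -
    have "1 / real (Suc j) \<le> 1 / 2" using j1 by (simp add: field_simps)
    moreover have "\<eta> \<le> \<epsilon>0 / 4" unfolding \<eta>_def using e0 by (simp add: field_simps)
    ultimately show ?thesis unfolding \<theta>_def using e8 by linarith
  qed
  show ?thesis
  proof (intro exI[of _ "K + M"] conjI allI impI)
    show "K + M > 0" using K0 M1 by simp
    fix q L :: nat and lo :: int
    assume q1: "q \<ge> 1" and thL: "real q powr (1 / real (Suc j) + \<epsilon>0) \<le> 2 * real L"
    define Q where "Q = real q"
    have Q1: "Q \<ge> 1" unfolding Q_def using q1 by simp
    define R where "R = Q * Q powr (- \<eta>)"
    have R0: "R \<ge> 0" unfolding R_def using Q1 by simp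
    have QR: "Q powr \<theta> \<le> R"
    proof -
      have "Q powr \<theta> \<le> Q powr (1 - \<eta>)" using Q1 th1 by (intro powr_mono) auto
      also have "\<dots> = R"
      proof -
        have "Q powr (1 - \<eta>) = Q powr (1 + - \<eta>)" by simp
        also have "\<dots> = Q powr 1 * Q powr (- \<eta>)" by (rule powr_add)
        finally show ?thesis unfolding R_def using Q1 by simp
      qed
      finally show ?thesis .
    qed
    have rem: "norm (Ssum q g lo' (lo' + int r - 1)) \<le> M * R" if r: "r < q" for r lo'
    proof (cases "Q powr \<theta> \<le> 2 * real r")
      case True
      have "Q powr \<theta> \<ge> 1" using Q1 th0 by (simp add: ge_one_powr_ge_zero)
      then have "2 * real r \<ge> 1" using True by linarith
      then have r1: "r \<ge> 1" by (cases r) auto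
      have "norm (Ssum q g lo' (lo' + int r - 1)) \<le> K * real r * Q powr (- \<eta>)"
        using K[OF q1 r1] True r unfolding Q_def by simp
      also have "\<dots> \<le> M * Q * Q powr (- \<eta>)"
        using r M1 K0 unfolding Q_def by (intro mult_right_mono mult_mono) auto
      finally show ?thesis unfolding R_def by (simp add: mult.assoc)
    next
      case False
      have "norm (Ssum q g lo' (lo' + int r - 1)) \<le> real r"
        by (cases "r = 0") (auto simp: Ssum_def intro: Ssum_triv[unfolded Ssum_def])
      also have "\<dots> \<le> Q powr \<theta>" using False Q1 by simp
      also have "\<dots> \<le> R" by (rule QR)
      also have "\<dots> \<le> M * R" using M1 R0 by (simp add: mult_le_cancel_right1)
      finally show ?thesis .
    qed
    have full: "norm (Ssum q g 0 (int q - 1)) \<le> K * R"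
    proof -
      have "Q powr \<theta> \<le> Q powr 1" using Q1 th1 eta0 by (intro powr_mono) auto
      then have "real q powr \<theta> \<le> 2 * real q" unfolding Q_def using q1 by simp
      then have "norm (Ssum q g 0 (0 + int q - 1)) \<le> K * real q * real q powr (- \<eta>)"
        using K[OF q1 q1, of 0] by simp
      then have "norm (Ssum q g 0 (int q - 1)) \<le> K * real q * real q powr (- \<eta>)" by simp
      then show ?thesis unfolding R_def Q_def by (simp add: mult.assoc)
    qed
    have per: "e (of_int (poly g (n + int q)) / real q) = e (of_int (poly g n) / real q)" for n
      by (rule e_period) (use q1 in simp)
    have ind: "norm (Ssum q g lo' (lo' + int L' - 1)) \<le> real (L' div q) * (K * R) + M * R" for L' lo'
    proof (induction L' arbitrary: lo' rule: less_induct)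
      case (less L')
      show ?case
      proof (cases "L' < q")
        case True
        then show ?thesis using rem[OF True, of lo'] by simp
      next
        case False
        have split: "Ssum q g lo' (lo' + int L' - 1) = Ssum q g lo' (lo' + int q - 1) + Ssum q g (lo' + int q) ((lo' + int q) + int (L' - q) - 1)"
        proof -
          have "Ssum q g lo' (lo' + int L' - 1) = Ssum q g lo' (lo' + int q - 1) + Ssum q g (lo' + int q - 1 + 1) (lo' + int L' - 1)"
            unfolding Ssum_def by (rule sum_int_split) (use False in auto)
          moreover have "(lo' + int q) + int (L' - q) - 1 = lo' + int L' - 1" using False by simp
          ultimately show ?thesis by simp
        qed
        have sh: "Ssum q g lo' (lo' + int q - 1) = Ssum q g 0 (int q - 1)"
          unfolding Ssum_def
          by (rule sum_shift_period[where F="\<lambda>n. e (of_int (poly g n) / real q)", OF per]) (use q1 in simp)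
        have lt: "L' - q < L'" using False q1 by simp
        have "norm (Ssum q g lo' (lo' + int L' - 1)) \<le> norm (Ssum q g 0 (int q - 1)) + norm (Ssum q g (lo' + int q) ((lo' + int q) + int (L' - q) - 1))"
          unfolding split sh by (rule norm_triangle_ineq)
        also have "\<dots> \<le> K * R + (real ((L' - q) div q) * (K * R) + M * R)"
          by (rule add_mono[OF full less.IH[OF lt]])
        also have "\<dots> = real (L' div q) * (K * R) + M * R"
        proof -
          have "L' div q = Suc ((L' - q) div q)" using False q1 by (simp add: le_div_geq)
          then show ?thesis by (simp add: algebra_simps)
        qed
        finally show ?thesis .
      qed
    qed
    have Lq: "real L \<ge> 1"
    proof -
      have "Q powr \<theta> \<ge> 1" using Q1 th0 by (simp add: ge_one_powr_ge_zero)
      then have "2 * real L \<ge> 1" using thL unfolding Q_def \<theta>_def by linarith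
      then show ?thesis by simp
    qed
    show "norm (Ssum q g lo (lo + int L - 1)) \<le> (K + M) * real L * real q powr (- (\<epsilon>0 / (4 * 2^j)))"
    proof (cases "real L \<le> 2 * real q")
      case True
      have "norm (Ssum q g lo (lo + int L - 1)) \<le> K * real L * real q powr (- \<eta>)"
        using K[OF q1 _ thL[folded \<theta>_def] True] Lq by simp
      also have "\<dots> \<le> (K + M) * real L * real q powr (- \<eta>)"
        using M1 by (intro mult_right_mono) auto
      finally show ?thesis unfolding \<eta>_def .
    next
      case False
      have "norm (Ssum q g lo (lo + int L - 1)) \<le> real (L div q) * (K * R) + M * R" by (rule ind)
      also have "\<dots> \<le> K * real L * Q powr (- \<eta>) + M * real L * Q powr (- \<eta>)"
      proof (rule add_mono)
        have "real (L div q) * Q \<le> real L" unfolding Q_def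
        proof -
          have "L div q * q \<le> L" by (rule div_times_less_eq_dividend)
          then have "real (L div q * q) \<le> real L" by (rule of_nat_mono)
          then show "real (L div q) * real q \<le> real L" by simp
        qed
        then have "real (L div q) * Q * (K * Q powr (- \<eta>)) \<le> real L * (K * Q powr (- \<eta>))"
          using K0 by (intro mult_right_mono) auto
        then show "real (L div q) * (K * R) \<le> K * real L * Q powr (- \<eta>)" unfolding R_def by (simp add: mult_ac)
        have "Q \<le> real L" using False unfolding Q_def by simp
        then have "Q * (M * Q powr (- \<eta>)) \<le> real L * (M * Q powr (- \<eta>))"
          using M1 by (intro mult_right_mono) auto
        then show "M * R \<le> M * real L * Q powr (- \<eta>)" unfolding R_def by (simp add: mult_ac)
      qed
      also have "\<dots> = (K + M) * real L * real q powr (- (\<epsilon>0 / (4 * 2^j)))"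
        unfolding Q_def \<eta>_def by (simp add: algebra_simps)
      finally show ?thesis .
    qed
  qed
qed


theorem proposition8p2:
  fixes \<epsilon> :: real and d :: nat and g :: "int poly"
  assumes "\<epsilon> > 0" and "d \<ge> 2" and "degree g = d"
  shows "\<exists>\<eta>>0. \<exists>C. \<forall>q::nat. q > 0 \<longrightarrow>
           (\<forall>(a::real) (N::real). N \<ge> real q powr (1 / real d + \<epsilon>) \<longrightarrow>
              norm (\<Sum>n \<in> {n::int. a \<le> real_of_int n \<and> real_of_int n \<le> a + N}.
                       e (real_of_int (poly g n) / real q))
              \<le> C * N / real q powr \<eta>)"
proof -
  define j where "j = d - 1"
  have dj: "d = Suc j" and j1: "j \<ge> 1" unfolding j_def using assms(2) by auto
  define \<epsilon>0 where "\<epsilon>0 = min \<epsilon> (1/8)"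
  have e0: "\<epsilon>0 > 0" "\<epsilon>0 \<le> 1/8" "\<epsilon>0 \<le> \<epsilon>" unfolding \<epsilon>0_def using assms(1) by auto
  obtain K where K0: "K > 0" and K: "\<And>q L lo. q \<ge> 1 \<Longrightarrow> real q powr (1 / real (Suc j) + \<epsilon>0) \<le> 2 * real L \<Longrightarrow>
           norm (Ssum q g lo (lo + int L - 1)) \<le> K * real L * real q powr (- (\<epsilon>0 / (4 * 2^j)))"
    using ext_bound[OF assms(3)[unfolded dj] j1 e0(1,2)] by blast
  define \<eta> where "\<eta> = \<epsilon>0 / (4 * 2^j)"
  define \<theta> where "\<theta> = 1 / real d + \<epsilon>0"
  have eta0: "\<eta> > 0" unfolding \<eta>_def using e0 by simp
  have eta_th: "\<eta> \<le> \<theta>"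
  proof -
    have "(1::real) \<le> 4 * 2 ^ j" using one_le_power[of "2::real" j] by linarith
    then have "\<eta> \<le> \<epsilon>0" unfolding \<eta>_def using e0 by (simp add: field_simps)
    moreover have "1 / real d \<ge> 0" by simp
    ultimately show ?thesis unfolding \<theta>_def by linarith
  qed
  define C where "C = max 4 (2 * K)"
  have key: "norm (\<Sum>n \<in> {n::int. a \<le> real_of_int n \<and> real_of_int n \<le> a + N}. e (real_of_int (poly g n) / real q))
              \<le> C * N / real q powr \<eta>" if q0: "q > 0" and hN: "N \<ge> real q powr (1 / real d + \<epsilon>)"
    for q :: nat and a N :: real
  proof -
    define Q where "Q = real q"
    have Q1: "Q \<ge> 1" unfolding Q_def using q0 by simp
    have thN: "Q powr \<theta> \<le> N"
    proof -
      have "Q powr \<theta> \<le> Q powr (1 / real d + \<epsilon>)" unfolding \<theta>_def using Q1 e0 by (intro powr_mono) auto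
      then show ?thesis using hN unfolding Q_def by simp
    qed
    have th1: "Q powr \<theta> \<ge> 1" using Q1 e0 unfolding \<theta>_def by (simp add: ge_one_powr_ge_zero)
    have Qeta: "Q powr \<eta> \<le> Q powr \<theta>" using Q1 eta_th by (intro powr_mono) auto
    have Qeta0: "Q powr \<eta> > 0" using Q1 by simp
    define lo where "lo = \<lceil>a\<rceil>"
    define hi where "hi = \<lfloor>a + N\<rfloor>"
    have set_eq: "{n::int. a \<le> real_of_int n \<and> real_of_int n \<le> a + N} = {lo..hi}"
      unfolding lo_def hi_def by (auto simp: ceiling_le_iff le_floor_iff)
    have S_eq: "(\<Sum>n \<in> {n::int. a \<le> real_of_int n \<and> real_of_int n \<le> a + N}. e (real_of_int (poly g n) / real q))
                = Ssum q g lo hi" unfolding set_eq Ssum_def ..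
    have hl1: "real_of_int (hi - lo + 1) \<le> N + 1" unfolding lo_def hi_def by linarith
    have hl2: "real_of_int (hi - lo + 1) \<ge> N - 1" unfolding lo_def hi_def by linarith
    have goal_form: "C * N / real q powr \<eta> = C * N * Q powr (- \<eta>)"
      unfolding Q_def by (simp add: powr_minus divide_inverse)
    have main: "norm (Ssum q g lo hi) \<le> C * N * Q powr (- \<eta>)"
    proof (cases "N < 2")
      case True
      have "norm (Ssum q g lo hi) \<le> (\<Sum>n\<in>{lo..hi}. norm (e (of_int (poly g n) / real q)))"
        unfolding Ssum_def by (rule norm_sum)
      also have "\<dots> = real (card {lo..hi})" by simp
      also have "\<dots> \<le> N + 1" using hl1 thN th1 by (cases "lo \<le> hi") auto
      also have "\<dots> \<le> 2 * N" using thN th1 by linarith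
      also have "\<dots> \<le> C * N * Q powr (- \<eta>)"
      proof -
        have "Q powr \<eta> \<le> 2" using Qeta thN True by linarith
        then have "Q powr (- \<eta>) \<ge> 1 / 2" using Qeta0 by (simp add: powr_minus field_simps)
        moreover have "N \<ge> 0" using thN th1 by linarith
        ultimately have "4 * N * Q powr (- \<eta>) \<ge> 4 * N * (1 / 2)" by (intro mult_left_mono) auto
        moreover have "C * N * Q powr (- \<eta>) \<ge> 4 * N * Q powr (- \<eta>)"
          unfolding C_def using \<open>N \<ge> 0\<close> by (intro mult_right_mono) auto
        ultimately show ?thesis by linarith
      qed
      finally show "norm (Ssum q g lo hi) \<le> C * N * Q powr (- \<eta>)" .
    next
      case False
      define L where "L = nat (hi - lo + 1)"
      have hL: "hi = lo + int L - 1" unfolding L_def using hl2 False by linarith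
      have rL: "real L = real_of_int (hi - lo + 1)" unfolding L_def using hl2 False by simp
      have "Q powr \<theta> \<le> 2 * real L" using thN hl2 False rL by linarith
      then have "norm (Ssum q g lo hi) \<le> K * real L * real q powr (- (\<epsilon>0 / (4 * 2^j)))"
        using K[of q L lo] q0 dj hL unfolding Q_def \<theta>_def by simp
      also have "\<dots> = K * real L * Q powr (- \<eta>)" unfolding Q_def \<eta>_def ..
      also have "\<dots> \<le> (2 * K) * N * Q powr (- \<eta>)"
      proof -
        have "real L \<le> 2 * N" using rL hl1 False by linarith
        then have "K * real L \<le> K * (2 * N)" using K0 by (intro mult_left_mono) auto
        then show ?thesis by (intro mult_right_mono) auto
      qed
      also have "\<dots> \<le> C * N * Q powr (- \<eta>)"
        unfolding C_def using False by (intro mult_right_mono) auto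
      finally show "norm (Ssum q g lo hi) \<le> C * N * Q powr (- \<eta>)" .
    qed
    then show "norm (\<Sum>n \<in> {n::int. a \<le> real_of_int n \<and> real_of_int n \<le> a + N}. e (real_of_int (poly g n) / real q))
              \<le> C * N / real q powr \<eta>"
      unfolding S_eq goal_form .
  qed
  show ?thesis using eta0 key by blast
qed


end
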